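(* Let $G$ be an equationally Noetherian group with a solvable word problem. Then every finitely generated, recursively presented group $H$ which is residually $G$ has a solvable word problem.
   Context: A group $G$ is equationally Noetherian if for every finite tuple of variables $\mathbf{x}=(x_1,\dots,x_n)$ and every set $\Sigma\subseteq G\ast F(\mathbf{x})$ of equations over $G$, there is a finite subset $\Sigma_0\subseteq\Sigma$ such that the set of solutions $\{\mathbf{g}\in G^n : \sigma(\mathbf{g})=1\ \forall\sigma\in\Sigma\}$ equals $\{\mathbf{g}\in G^n : \sigma(\mathbf{g})=1\ \forall\sigma\in\Sigma_0\}$, where $\sigma(\mathbf{g})$ is obtained by substituting $g_i$ for $x_i$. A group $H$ is residually $G$ if for every $1\ne h\in H$ there is a homomorphism $f:H\to G$ with $f(h)\ne 1$. *)

theory Defs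
  imports "HOL-Algebra.Algebra" "HOL-Library.Nat_Bijection"
begin

datatype recf = Zr | Sc | Proj nat | Cn recf "recf list" | Pr recf recf | Mn recf

inductive reval :: "recf \<Rightarrow> nat list \<Rightarrow> nat \<Rightarrow> bool" where
  zero: "reval Zr xs 0"
| succ: "reval Sc (x # xs) (Suc x)"
| proj: "i < length xs \<Longrightarrow> reval (Proj i) xs (xs ! i)"
| comp: "list_all2 (\<lambda>g y. reval g xs y) gs ys \<Longrightarrow> reval f ys z \<Longrightarrow> reval (Cn f gs) xs z"
| pr0: "reval f xs y \<Longrightarrow> reval (Pr f g) (0 # xs) y"
| prS: "reval (Pr f g) (n # xs) y \<Longrightarrow> reval g (n # y # xs) z \<Longrightarrow> reval (Pr f g) (Suc n # xs) z"
| mn: "reval f (n # xs) 0 \<Longrightarrow> (\<forall>m<n. \<exists>y. reval f (m # xs) y \<and> y \<noteq> 0) \<Longrightarrow> reval (Mn f) xs n"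

definition computable_set :: "nat set \<Rightarrow> bool" where
  "computable_set A \<longleftrightarrow> (\<exists>f. \<forall>n. reval f [n] (if n \<in> A then 1 else 0))"

definition re_set :: "nat set \<Rightarrow> bool" where
  "re_set A \<longleftrightarrow> (\<exists>f. \<forall>n. n \<in> A \<longleftrightarrow> (\<exists>y. reval f [n] y))"

text \<open>A letter (i, False) stands for x_i, (i, True) for x_i^{-1}.\<close>
type_synonym word = "(nat \<times> bool) list"

definition letter_code :: "nat \<times> bool \<Rightarrow> nat" where
  "letter_code l = 2 * fst l + (if snd l then 1 else 0)"

definition word_code :: "word \<Rightarrow> nat" where
  "word_code w = list_encode (map letter_code w)"

definition words_over :: "nat \<Rightarrow> word set" where
  "words_over k = {w. \<forall>l \<in> set w. fst l < k}"

definition flip_letter :: "nat \<times> bool \<Rightarrow> nat \<times> bool" where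
  "flip_letter l = (fst l, \<not> snd l)"

definition word_inv :: "word \<Rightarrow> word" where
  "word_inv w = rev (map flip_letter w)"

inductive_set normal_closure_words :: "nat \<Rightarrow> word set \<Rightarrow> word set" for k R where
  rel: "w \<in> R \<Longrightarrow> w \<in> normal_closure_words k R"
| empty: "[] \<in> normal_closure_words k R"
| mult: "u \<in> normal_closure_words k R \<Longrightarrow> v \<in> normal_closure_words k R \<Longrightarrow> u @ v \<in> normal_closure_words k R"
| inv: "u \<in> normal_closure_words k R \<Longrightarrow> word_inv u \<in> normal_closure_words k R"
| conj: "u \<in> normal_closure_words k R \<Longrightarrow> fst x < k \<Longrightarrow> [x] @ u @ [flip_letter x] \<in> normal_closure_words k R"
| ins: "u @ v \<in> normal_closure_words k R \<Longrightarrow> fst x < k \<Longrightarrow> u @ [x, flip_letter x] @ v \<in> normal_closure_words k R"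
| del: "u @ [x, flip_letter x] @ v \<in> normal_closure_words k R \<Longrightarrow> u @ v \<in> normal_closure_words k R"

definition eval_word :: "('a, 'b) monoid_scheme \<Rightarrow> (nat \<Rightarrow> 'a) \<Rightarrow> word \<Rightarrow> 'a" where
  "eval_word G g w = foldr (\<lambda>l acc. (if snd l then inv\<^bsub>G\<^esub> (g (fst l)) else g (fst l)) \<otimes>\<^bsub>G\<^esub> acc) w \<one>\<^bsub>G\<^esub>"

definition finitely_generated_group :: "('a, 'b) monoid_scheme \<Rightarrow> bool" where
  "finitely_generated_group H \<longleftrightarrow>
     (\<exists>(k::nat) g. g ` {..<k} \<subseteq> carrier H \<and> generate H (g ` {..<k}) = carrier H)"

text \<open>For finitely generated groups this is the usual notion (take a finite family, repeated).\<close>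
definition solvable_word_problem :: "('a, 'b) monoid_scheme \<Rightarrow> bool" where
  "solvable_word_problem G \<longleftrightarrow>
     (\<exists>g. range g \<subseteq> carrier G \<and> generate G (range g) = carrier G \<and>
          computable_set (word_code ` {w. eval_word G g w = \<one>\<^bsub>G\<^esub>}))"

definition recursively_presented :: "('a, 'b) monoid_scheme \<Rightarrow> bool" where
  "recursively_presented H \<longleftrightarrow>
     (\<exists>k g R. g ` {..<k} \<subseteq> carrier H \<and> generate H (g ` {..<k}) = carrier H \<and>
        R \<subseteq> words_over k \<and> re_set (word_code ` R) \<and>
        (\<forall>w \<in> words_over k. eval_word H g w = \<one>\<^bsub>H\<^esub> \<longleftrightarrow> w \<in> normal_closure_words k R))"

definition residually :: "('a, 'b) monoid_scheme \<Rightarrow> ('c, 'd) monoid_scheme \<Rightarrow> bool" where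
  "residually G H \<longleftrightarrow>
     (\<forall>h \<in> carrier H. h \<noteq> \<one>\<^bsub>H\<^esub> \<longrightarrow> (\<exists>f \<in> hom H G. f h \<noteq> \<one>\<^bsub>G\<^esub>))"

text \<open>Equations over G in variables x_0..x_{n-1}: words in G * F(x), a letter being either a
  constant (Inl g) or a variable letter (Inr (i, b)), b = True meaning x_i^{-1}.\<close>
type_synonym 'a eqn = "('a + nat \<times> bool) list"

definition is_equation :: "('a, 'b) monoid_scheme \<Rightarrow> nat \<Rightarrow> 'a eqn \<Rightarrow> bool" where
  "is_equation G n e \<longleftrightarrow>
     (\<forall>l \<in> set e. case l of Inl c \<Rightarrow> c \<in> carrier G | Inr v \<Rightarrow> fst v < n)"

definition eval_eqn :: "('a, 'b) monoid_scheme \<Rightarrow> 'a list \<Rightarrow> 'a eqn \<Rightarrow> 'a" where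
  "eval_eqn G as e = foldr (\<lambda>l acc. (case l of Inl c \<Rightarrow> c
        | Inr v \<Rightarrow> (if snd v then inv\<^bsub>G\<^esub> (as ! fst v) else as ! fst v)) \<otimes>\<^bsub>G\<^esub> acc) e \<one>\<^bsub>G\<^esub>"

definition solution_set :: "('a, 'b) monoid_scheme \<Rightarrow> nat \<Rightarrow> 'a eqn set \<Rightarrow> 'a list set" where
  "solution_set G n S = {as. length as = n \<and> set as \<subseteq> carrier G \<and>
                             (\<forall>e \<in> S. eval_eqn G as e = \<one>\<^bsub>G\<^esub>)}"

definition equationally_noetherian :: "('a, 'b) monoid_scheme \<Rightarrow> bool" where
  "equationally_noetherian G \<longleftrightarrow>
     (\<forall>n S. (\<forall>e \<in> S. is_equation G n e) \<longrightarrow>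
        (\<exists>S0 \<subseteq> S. finite S0 \<and> solution_set G n S = solution_set G n S0))"

end

theory Submission
  imports Defs
begin


definition rf :: "nat \<Rightarrow> (nat list \<Rightarrow> nat) \<Rightarrow> bool" where
  "rf n F \<longleftrightarrow> (\<exists>f. \<forall>xs. length xs = n \<longrightarrow> reval f xs (F xs))"

fun cst :: "nat \<Rightarrow> recf" where
  "cst 0 = Zr" | "cst (Suc c) = Cn Sc [cst c]"

lemma reval_cst: "reval (cst c) xs c"
  by (induction c) (auto intro: reval.intros)

lemma rf_cong: "rf n F \<Longrightarrow> (\<And>xs. length xs = n \<Longrightarrow> F xs = G xs) \<Longrightarrow> rf n G"
  unfolding rf_def by metis

lemma rf_const: "rf n (\<lambda>xs. c)"
  unfolding rf_def using reval_cst by blast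

lemma rf_proj: "i < n \<Longrightarrow> rf n (\<lambda>xs. xs ! i)"
  unfolding rf_def by (metis reval.proj)

lemma rf_Suc1: "rf 1 (\<lambda>xs. Suc (xs ! 0))"
  unfolding rf_def
proof (intro exI allI impI)
  fix xs :: "nat list" assume "length xs = 1"
  then obtain x where "xs = [x]" by (metis One_nat_def length_0_conv length_Suc_conv)
  then show "reval Sc xs (Suc (xs ! 0))" by (auto intro: reval.intros)
qed

lemma rf_comp:
  assumes "rf m H" "\<forall>j<m. rf n (Gs j)"
  shows "rf n (\<lambda>xs. H (map (\<lambda>j. Gs j xs) [0..<m]))"
proof -
  obtain h where h: "\<forall>xs. length xs = m \<longrightarrow> reval h xs (H xs)" using assms(1) rf_def by blast
  have "\<forall>j. \<exists>g. j < m \<longrightarrow> (\<forall>xs. length xs = n \<longrightarrow> reval g xs (Gs j xs))"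
    using assms(2) rf_def by blast
  then obtain gsel where g: "\<And>j. j < m \<Longrightarrow> (\<forall>xs. length xs = n \<longrightarrow> reval (gsel j) xs (Gs j xs))"
    by metis
  show ?thesis unfolding rf_def
  proof (intro exI allI impI)
    fix xs :: "nat list" assume l: "length xs = n"
    show "reval (Cn h (map gsel [0..<m])) xs (H (map (\<lambda>j. Gs j xs) [0..<m]))"
    proof (rule reval.comp)
      show "list_all2 (\<lambda>g y. reval g xs y) (map gsel [0..<m]) (map (\<lambda>j. Gs j xs) [0..<m])"
        using g l by (auto simp: list_all2_conv_all_nth)
      show "reval h (map (\<lambda>j. Gs j xs) [0..<m]) (H (map (\<lambda>j. Gs j xs) [0..<m]))"
        using h by simp
    qed
  qed
qed

fun prec :: "(nat list \<Rightarrow> nat) \<Rightarrow> (nat list \<Rightarrow> nat) \<Rightarrow> nat \<Rightarrow> nat list \<Rightarrow> nat" where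
  "prec F S 0 ys = F ys" | "prec F S (Suc m) ys = S (m # prec F S m ys # ys)"

lemma rf_prim:
  assumes "rf n F" "rf (Suc (Suc n)) S"
  shows "rf (Suc n) (\<lambda>xs. prec F S (hd xs) (tl xs))"
proof -
  obtain f where f: "\<forall>xs. length xs = n \<longrightarrow> reval f xs (F xs)" using assms(1) rf_def by blast
  obtain s where s: "\<forall>xs. length xs = Suc (Suc n) \<longrightarrow> reval s xs (S xs)" using assms(2) rf_def by blast
  have *: "length ys = n \<Longrightarrow> reval (Pr f s) (m # ys) (prec F S m ys)" for m ys
  proof (induction m)
    case 0 then show ?case using f by (simp add: reval.pr0)
  next
    case (Suc m) then show ?case using s by (simp add: reval.prS)
  qed
  show ?thesis unfolding rf_def
  proof (intro exI allI impI)
    fix xs :: "nat list" assume "length xs = Suc n"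
    then obtain x ys where "xs = x # ys" "length ys = n" by (metis length_Suc_conv)
    then show "reval (Pr f s) xs (prec F S (hd xs) (tl xs))" using * by simp
  qed
qed

lemma rf_mn:
  assumes "rf (Suc n) P" "\<And>xs. length xs = n \<Longrightarrow> \<exists>m. P (m # xs) = 0"
  shows "rf n (\<lambda>xs. LEAST m. P (m # xs) = 0)"
proof -
  obtain p where p: "\<forall>xs. length xs = Suc n \<longrightarrow> reval p xs (P xs)" using assms(1) rf_def by blast
  show ?thesis unfolding rf_def
  proof (intro exI allI impI)
    fix xs :: "nat list" assume l: "length xs = n"
    show "reval (Mn p) xs (LEAST m. P (m # xs) = 0)"
    proof (rule reval.mn)
      show "reval p ((LEAST m. P (m # xs) = 0) # xs) 0"
        proof -
        have "P ((LEAST m. P (m # xs) = 0) # xs) = 0" using assms(2)[OF l] by (rule LeastI_ex)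
        then show ?thesis using p l by (metis length_Cons)
      qed
      show "\<forall>m<(LEAST m. P (m # xs) = 0). \<exists>y. reval p (m # xs) y \<and> y \<noteq> 0"
        proof (intro allI impI)
        fix m assume "m < (LEAST m. P (m # xs) = 0)"
        then have "P (m # xs) \<noteq> 0" by (rule not_less_Least)
        then show "\<exists>y. reval p (m # xs) y \<and> y \<noteq> 0" using p l by (metis length_Cons)
      qed
    qed
  qed
qed

lemma rf_comp1: "rf 1 H \<Longrightarrow> rf n A \<Longrightarrow> rf n (\<lambda>xs. H [A xs])"
  using rf_comp[of 1 H n "\<lambda>_. A"] by simp

lemma rf_comp2: "rf 2 H \<Longrightarrow> rf n A \<Longrightarrow> rf n B \<Longrightarrow> rf n (\<lambda>xs. H [A xs, B xs])"
  using rf_comp[of 2 H n "\<lambda>j. if j = 0 then A else B"] by (simp add: upt_rec)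

lemma rf_comp3: "rf 3 H \<Longrightarrow> rf n A \<Longrightarrow> rf n B \<Longrightarrow> rf n C \<Longrightarrow> rf n (\<lambda>xs. H [A xs, B xs, C xs])"
  using rf_comp[of 3 H n "\<lambda>j. if j = 0 then A else if j = 1 then B else C"] by (simp add: upt_rec)

lemma rf_reindex: "rf m F \<Longrightarrow> (\<And>j. j < m \<Longrightarrow> idx j < n) \<Longrightarrow> rf n (\<lambda>ys. F (map (\<lambda>j. ys ! idx j) [0..<m]))"
  using rf_comp[of m F n "\<lambda>j ys. ys ! idx j"] rf_proj by auto



lemma len2: "length xs = 2 \<Longrightarrow> xs = [xs!0, xs!1]"
  by (cases xs; cases "tl xs"; auto)

lemma rf_num: "rf (Suc m) F \<Longrightarrow> Suc m = k \<Longrightarrow> rf k F" by simp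

lemma rf_fun1: "rf 1 H \<Longrightarrow> (\<And>a. H [a] = h a) \<Longrightarrow> rf n A \<Longrightarrow> rf n (\<lambda>xs. h (A xs))"
  using rf_comp1[of H n A] by simp

lemma rf_fun2: "rf 2 H \<Longrightarrow> (\<And>a b. H [a, b] = h a b) \<Longrightarrow> rf n A \<Longrightarrow> rf n B \<Longrightarrow> rf n (\<lambda>xs. h (A xs) (B xs))"
  using rf_comp2[of H n A B] by simp

lemma rf_Suc: "rf n A \<Longrightarrow> rf n (\<lambda>xs. Suc (A xs))"
  by (rule rf_fun1[OF rf_Suc1]) simp_all

lemma prec_add: "prec (\<lambda>ys. ys!0) (\<lambda>ys. Suc (ys!1)) m ys = m + ys!0"
  by (induction m) auto

lemma rf_add2: "rf 2 (\<lambda>xs. xs!0 + xs!1)"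
proof -
  have "rf (Suc 1) (\<lambda>xs. prec (\<lambda>ys. ys!0) (\<lambda>ys. Suc (ys!1)) (hd xs) (tl xs))"
    by (rule rf_prim; intro rf_proj rf_Suc; simp)
  then have "rf (Suc 1) (\<lambda>xs. xs!0 + xs!1)"
  proof (rule rf_cong, goal_cases)
    case (1 xs) then show ?case using prec_add[of "hd xs" "tl xs"] by (cases xs; cases "tl xs"; auto)
  qed
  then show ?thesis by (simp add: numeral_2_eq_2)
qed

lemma rf_add: "rf n A \<Longrightarrow> rf n B \<Longrightarrow> rf n (\<lambda>xs. A xs + B xs)"
  by (rule rf_fun2[OF rf_add2]) simp_all

lemma prec_mult: "prec (\<lambda>ys. 0) (\<lambda>ys. ys!1 + ys!2) m ys = m * ys!0"
  by (induction m) auto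

lemma rf_mult2: "rf 2 (\<lambda>xs. xs!0 * xs!1)"
proof -
  have "rf (Suc 1) (\<lambda>xs. prec (\<lambda>ys. 0) (\<lambda>ys. ys!1 + ys!2) (hd xs) (tl xs))"
    by (rule rf_prim; intro rf_proj rf_add rf_const; simp)
  then have "rf (Suc 1) (\<lambda>xs. xs!0 * xs!1)"
  proof (rule rf_cong, goal_cases)
    case (1 xs) then show ?case using prec_mult[of "hd xs" "tl xs"] by (cases xs; cases "tl xs"; auto)
  qed
  then show ?thesis by (simp add: numeral_2_eq_2)
qed

lemma rf_mult: "rf n A \<Longrightarrow> rf n B \<Longrightarrow> rf n (\<lambda>xs. A xs * B xs)"
  by (rule rf_fun2[OF rf_mult2]) simp_all

lemma prec_pred: "prec (\<lambda>ys. 0) (\<lambda>ys. ys!0) m ys = m - 1"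
  by (induction m) auto

lemma rf_pred1: "rf 1 (\<lambda>xs. xs!0 - 1)"
proof -
  have "rf (Suc 0) (\<lambda>xs. prec (\<lambda>ys. 0) (\<lambda>ys. ys!0) (hd xs) (tl xs))"
    by (rule rf_prim; intro rf_proj rf_const; simp)
  then have "rf (Suc 0) (\<lambda>xs. xs!0 - 1)"
  proof (rule rf_cong, goal_cases)
    case (1 xs) then show ?case using prec_pred[of "hd xs" "tl xs"] by (cases xs; auto)
  qed
  then show ?thesis by simp
qed

lemma rf_pred: "rf n A \<Longrightarrow> rf n (\<lambda>xs. A xs - 1)"
  by (rule rf_fun1[OF rf_pred1]) simp_all

lemma prec_diff: "prec (\<lambda>ys. ys!0) (\<lambda>ys. ys!1 - 1) m ys = ys!0 - m"
  by (induction m) auto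

lemma rf_diff2: "rf 2 (\<lambda>xs. xs!1 - xs!0)"
proof -
  have "rf (Suc 1) (\<lambda>xs. prec (\<lambda>ys. ys!0) (\<lambda>ys. ys!1 - 1) (hd xs) (tl xs))"
    by (rule rf_prim; intro rf_proj rf_pred; simp)
  then have "rf (Suc 1) (\<lambda>xs. xs!1 - xs!0)"
  proof (rule rf_cong, goal_cases)
    case (1 xs) then show ?case using prec_diff[of "hd xs" "tl xs"] by (cases xs; cases "tl xs"; auto)
  qed
  then show ?thesis by (simp add: numeral_2_eq_2)
qed

lemma rf_diff: "rf n A \<Longrightarrow> rf n B \<Longrightarrow> rf n (\<lambda>xs. A xs - B xs)"
  by (rule rf_fun2[OF rf_diff2]) simp_all

lemma rf_drop_nth: "k + j < n \<Longrightarrow> rf n (\<lambda>xs. drop k xs ! j)"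
  by (rule rf_cong[OF rf_proj[of "k + j" n]]) auto

definition rfp :: "nat \<Rightarrow> (nat list \<Rightarrow> bool) \<Rightarrow> bool" where
  "rfp n P \<longleftrightarrow> rf n (\<lambda>xs. if P xs then 1 else 0)"

lemma rf_if: "rfp n P \<Longrightarrow> rf n A \<Longrightarrow> rf n B \<Longrightarrow> rf n (\<lambda>xs. if P xs then A xs else B xs)"
  unfolding rfp_def
proof -
  assume p: "rf n (\<lambda>xs. if P xs then 1 else 0)" and a: "rf n A" and b: "rf n B"
  show ?thesis
    by (rule rf_cong[OF rf_add[OF rf_mult[OF a p] rf_mult[OF b rf_diff[OF rf_const[where c=1] p]]]]) auto
qed

lemma rfp_const: "rfp n (\<lambda>xs. b)"
  unfolding rfp_def by (rule rf_const)

lemma rfp_eq: "rf n A \<Longrightarrow> rf n B \<Longrightarrow> rfp n (\<lambda>xs. A xs = B xs)"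
proof -
  assume a: "rf n A" and b: "rf n B"
  show ?thesis unfolding rfp_def
    by (rule rf_cong[OF rf_diff[OF rf_const[where c=1] rf_add[OF rf_diff[OF a b] rf_diff[OF b a]]]]) auto
qed

lemma rfp_less: "rf n A \<Longrightarrow> rf n B \<Longrightarrow> rfp n (\<lambda>xs. A xs < B xs)"
proof -
  assume a: "rf n A" and b: "rf n B"
  show ?thesis unfolding rfp_def
    by (rule rf_cong[OF rf_diff[OF rf_const[where c=1] rf_diff[OF rf_const[where c=1] rf_diff[OF b a]]]]) auto
qed

lemma rfp_le: "rf n A \<Longrightarrow> rf n B \<Longrightarrow> rfp n (\<lambda>xs. A xs \<le> B xs)"
proof -
  assume a: "rf n A" and b: "rf n B"
  show ?thesis unfolding rfp_def
    by (rule rf_cong[OF rf_diff[OF rf_const[where c=1] rf_diff[OF a b]]]) auto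
qed

lemma rfp_not: "rfp n P \<Longrightarrow> rfp n (\<lambda>xs. \<not> P xs)"
  unfolding rfp_def
proof -
  assume a: "rf n (\<lambda>xs. if P xs then 1 else 0)"
  show "rf n (\<lambda>xs. if \<not> P xs then 1 else 0)"
    by (rule rf_cong[OF rf_diff[OF rf_const[where c=1] a]]) auto
qed

lemma rfp_and: "rfp n P \<Longrightarrow> rfp n Q \<Longrightarrow> rfp n (\<lambda>xs. P xs \<and> Q xs)"
  unfolding rfp_def
proof -
  assume a: "rf n (\<lambda>xs. if P xs then 1 else 0)" and b: "rf n (\<lambda>xs. if Q xs then 1 else 0)"
  show "rf n (\<lambda>xs. if P xs \<and> Q xs then 1 else 0)"
    by (rule rf_cong[OF rf_mult[OF a b]]) auto
qed

lemma rfp_or: "rfp n P \<Longrightarrow> rfp n Q \<Longrightarrow> rfp n (\<lambda>xs. P xs \<or> Q xs)"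
  using rfp_not[OF rfp_and[OF rfp_not rfp_not], of n P Q] by simp

lemma rfp_imp: "rfp n P \<Longrightarrow> rfp n Q \<Longrightarrow> rfp n (\<lambda>xs. P xs \<longrightarrow> Q xs)"
  using rfp_or[OF rfp_not, of n P Q] by simp

lemma rf_cons_arg: "rf (Suc n) R \<Longrightarrow> rf n B \<Longrightarrow> rf n (\<lambda>xs. R (B xs # xs))"
proof -
  assume a: "rf (Suc n) R" "rf n B"
  have "rf n (\<lambda>xs. R (map (\<lambda>j. (if j = 0 then B else (\<lambda>xs. xs ! (j - 1))) xs) [0..<Suc n]))"
    by (rule rf_comp[OF a(1)]) (auto intro: a(2) rf_proj)
  then show ?thesis
  proof (rule rf_cong)
    fix xs :: "nat list" assume "length xs = n"
    then have "map (\<lambda>j. (if j = 0 then B else (\<lambda>xs. xs ! (j - 1))) xs) [0..<Suc n] = B xs # xs"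
      by (intro nth_equalityI) (auto simp del: upt_Suc simp: nth_Cons split: nat.split)
    then show "R (map (\<lambda>j. (if j = 0 then B else (\<lambda>xs. xs ! (j - 1))) xs) [0..<Suc n]) = R (B xs # xs)"
      by simp
  qed
qed

lemma rf_shift2: "rf (Suc n) F \<Longrightarrow> rf (Suc (Suc n)) (\<lambda>zs. F (zs!0 # drop 2 zs))"
proof -
  assume a: "rf (Suc n) F"
  have "rf (Suc (Suc n)) (\<lambda>zs. F (map (\<lambda>j. zs ! (if j = 0 then 0 else j + 1)) [0..<Suc n]))"
    by (rule rf_reindex[OF a]) auto
  then show ?thesis
  proof (rule rf_cong)
    fix zs :: "nat list" assume l: "length zs = Suc (Suc n)"
    have "map (\<lambda>j. zs ! (if j = 0 then 0 else j + 1)) [0..<Suc n] = zs!0 # drop 2 zs"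
      using l by (intro nth_equalityI) (auto simp del: upt_Suc simp: nth_Cons split: nat.split)
    then show "F (map (\<lambda>j. zs ! (if j = 0 then 0 else j + 1)) [0..<Suc n]) = F (zs!0 # drop 2 zs)"
      by simp
  qed
qed



lemma rf_drop1: "rf n A \<Longrightarrow> rf (Suc n) (\<lambda>ys. A (drop 1 ys))"
proof -
  assume a: "rf n A"
  have "rf (Suc n) (\<lambda>ys. A (map (\<lambda>j. ys ! (Suc j)) [0..<n]))"
    by (rule rf_reindex[OF a]) auto
  then show ?thesis
  proof (rule rf_cong, goal_cases)
    case (1 ys)
    then have "map (\<lambda>j. ys ! (Suc j)) [0..<n] = drop 1 ys"
      by (intro nth_equalityI) auto
    then show ?case by simp
  qed
qed

lemma rfp_drop1: "rfp n P \<Longrightarrow> rfp (Suc n) (\<lambda>ys. P (drop 1 ys))"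
  unfolding rfp_def by (drule rf_drop1) simp

lemma rf_drop_drop_nth: "k + l + j < n \<Longrightarrow> rf n (\<lambda>xs. drop k (drop l xs) ! j)"
  using rf_drop_nth[of "l + k" j n] by (simp add: add.commute)

lemma prec_ball:
  "prec (\<lambda>_. 1) (\<lambda>zs. zs!1 * (if P (zs!0) (drop 2 zs) then 1 else 0)) m xs
   = (if \<forall>i<m. P i xs then 1 else 0)"
  by (induction m) (auto simp: less_Suc_eq)

lemma rfp_ball:
  assumes p: "rfp (Suc n) (\<lambda>ys. P (ys!0) (drop 1 ys))" and b: "rf n B"
  shows "rfp n (\<lambda>xs. \<forall>i<B xs. P i xs)"
proof -
  have q0: "rf (Suc (Suc n)) (\<lambda>zs. (\<lambda>ys. if P (ys!0) (drop 1 ys) then 1 else 0) (zs!0 # drop 2 zs))"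
    by (rule rf_shift2) (use p in \<open>simp add: rfp_def\<close>)
  have q: "rf (Suc (Suc n)) (\<lambda>zs. if P (zs!0) (drop 2 zs) then 1 else 0)"
    using q0 by simp
  have "rf (Suc n) (\<lambda>ys. prec (\<lambda>_. 1) (\<lambda>zs. zs!1 * (if P (zs!0) (drop 2 zs) then 1 else 0)) (hd ys) (tl ys))"
    by (rule rf_prim[OF rf_const rf_mult[OF rf_proj q]]) simp
  from rf_cons_arg[OF this b] show ?thesis
    unfolding rfp_def prec_ball by simp
qed

lemma rfp_bex:
  assumes p: "rfp (Suc n) (\<lambda>ys. P (ys!0) (drop 1 ys))" and b: "rf n B"
  shows "rfp n (\<lambda>xs. \<exists>i<B xs. P i xs)"
  using rfp_not[OF rfp_ball[OF rfp_not[OF p] b]] by simp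

lemma rf_least:
  assumes p: "rfp (Suc n) (\<lambda>ys. P (ys!0) (drop 1 ys))" and ex: "\<And>xs. length xs = n \<Longrightarrow> \<exists>m. P m xs"
  shows "rf n (\<lambda>xs. LEAST m. P m xs)"
proof -
  have q: "rf (Suc n) (\<lambda>ys. 1 - (if P (ys!0) (drop 1 ys) then 1 else 0))"
    by (rule rf_diff[OF rf_const]) (use p in \<open>simp add: rfp_def\<close>)
  have "rf n (\<lambda>xs. LEAST m. 1 - (if P ((m # xs)!0) (drop 1 (m # xs)) then 1 else 0) = (0::nat))"
    by (rule rf_mn[OF q]) (use ex in auto)
  then show ?thesis by (rule rf_cong) (rule arg_cong[where f=Least], auto)
qed

lemma rfp_all_below:
  "(\<And>j. j < m \<Longrightarrow> rfp n (P j)) \<Longrightarrow> rfp n (\<lambda>xs. \<forall>j<(m::nat). P j xs)"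
proof (induction m)
  case 0 then show ?case by (simp add: rfp_const)
next
  case (Suc m)
  have "rfp n (\<lambda>xs. (\<forall>j<m. P j xs) \<and> P m xs)"
    using Suc by (intro rfp_and) auto
  moreover have e: "(\<lambda>xs. \<forall>j<Suc m. P j xs) = (\<lambda>xs. (\<forall>j<m. P j xs) \<and> P m xs)"
    by (auto simp: less_Suc_eq)
  ultimately show ?case by (simp only: e)
qed

lemma rfp_all_list:
  "(\<And>r. r \<in> set rl \<Longrightarrow> rfp n (P r)) \<Longrightarrow> rfp n (\<lambda>xs. \<forall>r\<in>set rl. P r xs)"
proof (induction rl)
  case Nil then show ?case by (simp add: rfp_const)
next
  case (Cons r rl)
  have "rfp n (\<lambda>xs. P r xs \<and> (\<forall>r\<in>set rl. P r xs))"
    using Cons by (intro rfp_and) auto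
  then show ?case by simp
qed

lemma rf_div:
  assumes d: "0 < d" and a: "rf n A"
  shows "rf n (\<lambda>xs. A xs div d)"
proof -
  have "rf n (\<lambda>xs. LEAST q. A xs < d * Suc q)"
  proof (rule rf_least)
    show "rfp (Suc n) (\<lambda>ys. A (drop 1 ys) < d * Suc (ys ! 0))"
      by (intro rfp_less rf_drop1[OF a] rf_mult rf_const rf_Suc rf_proj) simp
    show "\<exists>m. A xs < d * Suc m" for xs using d
      by (metis div_less_iff_less_mult lessI mult.commute)
  qed
  then show ?thesis
  proof (rule rf_cong)
    fix xs :: "nat list"
    show "(LEAST q. A xs < d * Suc q) = A xs div d"
    proof (rule Least_equality)
      show "A xs < d * Suc (A xs div d)" using d
        by (metis div_less_iff_less_mult lessI mult.commute)
      show "\<And>y. A xs < d * Suc y \<Longrightarrow> A xs div d \<le> y" using d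
        by (metis div_less_iff_less_mult less_Suc_eq_le mult.commute)
    qed
  qed
qed

lemma rf_mod:
  assumes d: "0 < d" and a: "rf n A"
  shows "rf n (\<lambda>xs. A xs mod d)"
  by (rule rf_cong[OF rf_diff[OF a rf_mult[OF rf_const[where c=d] rf_div[OF d a]]]])
     (simp add: minus_mult_div_eq_mod)

lemma prec_tri: "prec (\<lambda>_. 0) (\<lambda>ys. ys!1 + Suc (ys!0)) m xs = triangle m"
  by (induction m) auto

lemma rf_triangle: "rf n A \<Longrightarrow> rf n (\<lambda>xs. triangle (A xs))"
proof -
  have "rf (Suc 0) (\<lambda>ys. prec (\<lambda>_. 0) (\<lambda>ys. ys!1 + Suc (ys!0)) (hd ys) (tl ys))"
    by (rule rf_prim; intro rf_const rf_add rf_Suc rf_proj; simp)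
  then have "rf (Suc 0) (\<lambda>ys. triangle (ys!0))"
  proof (rule rf_cong, goal_cases)
    case (1 xs) then show ?case using prec_tri[of "hd xs" "tl xs"] by (cases xs; auto)
  qed
  then have "rf 1 (\<lambda>ys. triangle (ys!0))" by simp
  then show "rf n A \<Longrightarrow> rf n (\<lambda>xs. triangle (A xs))"
    by (rule rf_fun1) simp_all
qed

lemma rf_penc: "rf n A \<Longrightarrow> rf n B \<Longrightarrow> rf n (\<lambda>xs. prod_encode (A xs, B xs))"
  unfolding prod_encode_def by (simp add: rf_add rf_triangle)

lemma fst_decode_least: "fst (prod_decode c) = (LEAST a. \<exists>b<Suc c. prod_encode (a, b) = c)"
proof (rule Least_equality[symmetric])
  show "\<exists>b<Suc c. prod_encode (fst (prod_decode c), b) = c"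
    by (metis le_imp_less_Suc le_prod_encode_2 prod.collapse prod_decode_inverse)
  show "\<And>y. \<exists>b<Suc c. prod_encode (y, b) = c \<Longrightarrow> fst (prod_decode c) \<le> y"
    by auto
qed

lemma snd_decode_least: "snd (prod_decode c) = (LEAST b. \<exists>a<Suc c. prod_encode (a, b) = c)"
proof (rule Least_equality[symmetric])
  show "\<exists>a<Suc c. prod_encode (a, snd (prod_decode c)) = c"
    by (metis le_imp_less_Suc le_prod_encode_1 prod.collapse prod_decode_inverse)
  show "\<And>y. \<exists>a<Suc c. prod_encode (a, y) = c \<Longrightarrow> snd (prod_decode c) \<le> y"
    by auto
qed

lemmas rfI = rf_const rfp_const rf_proj rf_drop_nth rf_drop_drop_nth rf_Suc rf_add rf_mult rf_diff
  rf_if rfp_eq rfp_less rfp_le rfp_not rfp_and rfp_or rfp_imp rf_triangle rf_penc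

lemma rf_pfst1: "rf 1 (\<lambda>xs. fst (prod_decode (xs!0)))"
  unfolding fst_decode_least
  by (rule rf_least) ((intro rfI rfp_bex | simp)+, metis le_imp_less_Suc le_prod_encode_2 prod_decode_inverse prod.collapse)



lemma rf_pfst: "rf n A \<Longrightarrow> rf n (\<lambda>xs. fst (prod_decode (A xs)))"
  by (rule rf_fun1[OF rf_pfst1]) simp_all

lemma rf_psnd1: "rf 1 (\<lambda>xs. snd (prod_decode (xs!0)))"
  unfolding snd_decode_least
  by (rule rf_least) ((intro rfI rfp_bex | simp)+, metis le_imp_less_Suc le_prod_encode_1 prod_decode_inverse prod.collapse)

lemma rf_psnd: "rf n A \<Longrightarrow> rf n (\<lambda>xs. snd (prod_decode (A xs)))"
  by (rule rf_fun1[OF rf_psnd1]) simp_all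

lemma rf_comp_gen:
  assumes "rf m R" "\<And>j. j < m \<Longrightarrow> rf n (Gs j)"
    "\<And>xs. length xs = n \<Longrightarrow> map (\<lambda>j. Gs j xs) [0..<m] = L xs"
  shows "rf n (\<lambda>xs. R (L xs))"
  using rf_comp[of m R n Gs] assms by (auto intro: rf_cong)

definition hd_c :: "nat \<Rightarrow> nat" where "hd_c c = fst (prod_decode (c - 1))"
definition tl_c :: "nat \<Rightarrow> nat" where "tl_c c = snd (prod_decode (c - 1))"
definition cons_c :: "nat \<Rightarrow> nat \<Rightarrow> nat" where "cons_c x c = Suc (prod_encode (x, c))"
definition drop_c :: "nat \<Rightarrow> nat \<Rightarrow> nat" where "drop_c i c = (tl_c ^^ i) c"
definition len_c :: "nat \<Rightarrow> nat" where "len_c c = length (list_decode c)"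
definition nth_c :: "nat \<Rightarrow> nat \<Rightarrow> nat" where "nth_c c i = hd_c (drop_c i c)"

lemma rf_hd_c: "rf n A \<Longrightarrow> rf n (\<lambda>xs. hd_c (A xs))"
  unfolding hd_c_def by (intro rf_pfst rf_diff rf_const)
lemma rf_tl_c: "rf n A \<Longrightarrow> rf n (\<lambda>xs. tl_c (A xs))"
  unfolding tl_c_def by (intro rf_psnd rf_diff rf_const)
lemma rf_cons_c: "rf n A \<Longrightarrow> rf n B \<Longrightarrow> rf n (\<lambda>xs. cons_c (A xs) (B xs))"
  unfolding cons_c_def by (intro rf_Suc rf_penc)

lemma cons_c_enc[simp]: "cons_c x (list_encode xs) = list_encode (x # xs)"
  by (simp add: cons_c_def)

lemma prod_decode_0: "prod_decode 0 = (0, 0)"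
  by (simp add: prod_decode_def prod_decode_aux.simps)

lemma decode_nz: "c \<noteq> 0 \<Longrightarrow> list_decode c = hd_c c # list_decode (tl_c c)"
  by (cases c) (auto simp: hd_c_def tl_c_def split: prod.split)

lemma tl_c_enc: "tl_c c = list_encode (tl (list_decode c))"
proof (cases "c = 0")
  case True then show ?thesis by (simp add: tl_c_def prod_decode_0)
next
  case False then show ?thesis by (subst decode_nz) auto
qed

lemma hd_c_dec: "list_decode c \<noteq> [] \<Longrightarrow> hd_c c = hd (list_decode c)"
  by (metis decode_nz list.sel(1) list_decode.simps(1))

lemma drop_c_enc: "drop_c i c = list_encode (drop i (list_decode c))"
  by (induction i) (auto simp: drop_c_def tl_c_enc drop_Suc tl_drop)

lemma nth_c_dec: "i < length (list_decode c) \<Longrightarrow> nth_c c i = list_decode c ! i"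
  by (simp add: nth_c_def drop_c_enc hd_c_dec hd_drop_conv_nth)

lemma nth_c_enc: "i < length xs \<Longrightarrow> nth_c (list_encode xs) i = xs ! i"
  by (simp add: nth_c_dec)

lemma prec_drop: "prec (\<lambda>ys. ys!0) (\<lambda>ys. tl_c (ys!1)) i ys = drop_c i (ys!0)"
  by (induction i) (auto simp: drop_c_def)

lemma rf_drop_c2: "rf 2 (\<lambda>xs. drop_c (xs!0) (xs!1))"
proof -
  have "rf (Suc 1) (\<lambda>xs. prec (\<lambda>ys. ys!0) (\<lambda>ys. tl_c (ys!1)) (hd xs) (tl xs))"
    by (rule rf_prim; intro rf_proj rf_tl_c; simp)
  then have "rf (Suc 1) (\<lambda>xs. drop_c (xs!0) (xs!1))"
  proof (rule rf_cong, goal_cases)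
    case (1 xs) then show ?case using prec_drop[of "hd xs" "tl xs"] by (cases xs; cases "tl xs"; auto)
  qed
  then show ?thesis by (simp add: numeral_2_eq_2)
qed

lemma rf_drop_c: "rf n A \<Longrightarrow> rf n B \<Longrightarrow> rf n (\<lambda>xs. drop_c (A xs) (B xs))"
  by (rule rf_fun2[OF rf_drop_c2]) simp_all

lemma rf_nth_c: "rf n A \<Longrightarrow> rf n B \<Longrightarrow> rf n (\<lambda>xs. nth_c (A xs) (B xs))"
  unfolding nth_c_def by (intro rf_hd_c rf_drop_c)

lemma len_c_least: "len_c c = (LEAST i. drop_c i c = 0)"
proof -
  have "drop_c i c = 0 \<longleftrightarrow> length (list_decode c) \<le> i" for i
    by (metis drop_c_enc drop_eq_Nil list_encode.simps(1) list_encode_eq)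
  then show ?thesis unfolding len_c_def by (auto intro!: Least_equality[symmetric])
qed

lemma rf_len_c1: "rf 1 (\<lambda>xs. len_c (xs!0))"
  unfolding len_c_least
  by (rule rf_least) ((intro rfI rf_drop_c | simp)+, metis drop_c_enc drop_all list_encode.simps(1) order_refl)

lemma rf_len_c: "rf n A \<Longrightarrow> rf n (\<lambda>xs. len_c (A xs))"
  by (rule rf_fun1[OF rf_len_c1]) simp_all



lemma prec_foldr:
  assumes "j \<le> length (list_decode c)"
  shows "prec (\<lambda>ys. ys!1) (\<lambda>zs. S (nth_c (zs!2) (len_c (zs!2) - Suc (zs!0))) (zs!1) (drop 4 zs)) j (c # init # ps)
     = foldr (\<lambda>x acc. S x acc ps) (drop (length (list_decode c) - j) (list_decode c)) init"
  using assms
proof (induction j)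
  case 0 then show ?case by simp
next
  case (Suc j)
  let ?L = "list_decode c"
  have k: "length ?L - Suc j < length ?L" using Suc.prems by simp
  have d: "drop (length ?L - Suc j) ?L = ?L ! (length ?L - Suc j) # drop (length ?L - j) ?L"
    using Cons_nth_drop_Suc[OF k] Suc.prems by (metis Suc_diff_Suc Suc_le_lessD)
  show ?case using Suc k by (simp add: d nth_c_dec len_c_def)
qed

lemma rf_foldr:
  assumes s: "rf (Suc (Suc n)) (\<lambda>ys. S (ys!0) (ys!1) (drop 2 ys))"
    and c: "rf n C" and i: "rf n I"
  shows "rf n (\<lambda>xs. foldr (\<lambda>x acc. S x acc xs) (list_decode (C xs)) (I xs))"
proof -
  define Gs where "Gs = (\<lambda>j (zs::nat list). if j = 0 then nth_c (zs!2) (len_c (zs!2) - Suc (zs!0))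
          else zs ! (if j = 1 then 1 else j + 2))"
  have rS': "rf (Suc (Suc (Suc (Suc n)))) (\<lambda>zs. (\<lambda>ys. S (ys!0) (ys!1) (drop 2 ys))
     (nth_c (zs!2) (len_c (zs!2) - Suc (zs!0)) # zs!1 # drop 4 zs))"
  proof (rule rf_comp_gen[OF s, where Gs=Gs])
    show "rf (Suc (Suc (Suc (Suc n)))) (Gs j)" if "j < Suc (Suc n)" for j
      using that unfolding Gs_def by (cases "j = 0") (auto intro!: rf_nth_c rf_len_c rf_diff rf_Suc rf_proj)
    fix zs :: "nat list" assume l: "length zs = Suc (Suc (Suc (Suc n)))"
    show "map (\<lambda>j. Gs j zs) [0..<Suc (Suc n)] = nth_c (zs!2) (len_c (zs!2) - Suc (zs!0)) # zs!1 # drop 4 zs"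
      using l unfolding Gs_def by (auto simp del: upt_Suc simp: nth_Cons eval_nat_numeral split: nat.split intro!: nth_equalityI)
  qed
  have R: "rf (Suc (Suc (Suc n))) (\<lambda>ys. prec (\<lambda>ys. ys!1)
        (\<lambda>zs. S (nth_c (zs!2) (len_c (zs!2) - Suc (zs!0))) (zs!1) (drop 4 zs)) (hd ys) (tl ys))"
    by (rule rf_prim[OF rf_proj]) (use rS' in simp_all)
  have "rf n (\<lambda>xs. (\<lambda>ys. prec (\<lambda>ys. ys!1)
        (\<lambda>zs. S (nth_c (zs!2) (len_c (zs!2) - Suc (zs!0))) (zs!1) (drop 4 zs)) (hd ys) (tl ys))
        (len_c (C xs) # C xs # I xs # xs))"
  proof (rule rf_comp_gen[OF R, where Gs="\<lambda>j xs. if j = 0 then len_c (C xs) else if j = 1 then C xs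
      else if j = 2 then I xs else xs ! (j - 3)"])
    show "rf n (\<lambda>xs. if j = 0 then len_c (C xs) else if j = 1 then C xs
      else if j = 2 then I xs else xs ! (j - 3))" if "j < Suc (Suc (Suc n))" for j
      using that by (cases "j = 0"; cases "j = 1"; cases "j = 2") (auto intro!: rf_len_c c i rf_proj)
    fix xs :: "nat list" assume l: "length xs = n"
    show "map (\<lambda>j. if j = 0 then len_c (C xs) else if j = 1 then C xs
      else if j = 2 then I xs else xs ! (j - 3)) [0..<Suc (Suc (Suc n))] = len_c (C xs) # C xs # I xs # xs"
      using l by (auto simp del: upt_Suc simp: nth_Cons split: nat.split intro!: nth_equalityI)
  qed
  then show ?thesis
  proof (rule rf_cong, goal_cases)
    case (1 xs)
    show ?case using prec_foldr[where j="length (list_decode (C xs))" and c="C xs" and S=S and init="I xs" and ps=xs]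
      by (simp add: len_c_def)
  qed
qed



definition app_c :: "nat \<Rightarrow> nat \<Rightarrow> nat" where "app_c u v = foldr cons_c (list_decode u) v"

lemma app_c_enc[simp]: "app_c (list_encode a) (list_encode b) = list_encode (a @ b)"
  unfolding app_c_def by (induction a) auto

lemma rf_app_c2: "rf 2 (\<lambda>xs. app_c (xs!0) (xs!1))"
  unfolding app_c_def
  using rf_foldr[where S="\<lambda>x acc xs. cons_c x acc" and n=2 and C="\<lambda>xs. xs!0" and I="\<lambda>xs. xs!1"]
  by (simp add: rf_cons_c rf_proj)

lemma rf_app_c: "rf n A \<Longrightarrow> rf n B \<Longrightarrow> rf n (\<lambda>xs. app_c (A xs) (B xs))"
  by (rule rf_fun2[OF rf_app_c2]) simp_all

definition flip_c :: "nat \<Rightarrow> nat" where "flip_c x = (if x mod 2 = 0 then x + 1 else x - 1)"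

lemma rf_flip_c: "rf n A \<Longrightarrow> rf n (\<lambda>xs. flip_c (A xs))"
  unfolding flip_c_def by (intro rf_if rfp_eq rf_mod rf_add rf_diff rf_const) simp_all

lemma flip_c_code: "flip_c (letter_code l) = letter_code (flip_letter l)"
  by (cases l) (auto simp: flip_c_def letter_code_def flip_letter_def)

definition inv_c :: "nat \<Rightarrow> nat" where
  "inv_c u = foldr (\<lambda>x acc. app_c acc (cons_c (flip_c x) 0)) (list_decode u) 0"

lemma rf_inv_c1: "rf 1 (\<lambda>xs. inv_c (xs!0))"
  unfolding inv_c_def
  using rf_foldr[where S="\<lambda>x acc xs. app_c acc (cons_c (flip_c x) 0)" and n=1 and C="\<lambda>xs. xs!0" and I="\<lambda>xs. 0"]
  by (simp add: rf_cons_c rf_proj rf_app_c rf_flip_c rf_const)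

lemma rf_inv_c: "rf n A \<Longrightarrow> rf n (\<lambda>xs. inv_c (A xs))"
  by (rule rf_fun1[OF rf_inv_c1]) simp_all

definition letter_decode :: "nat \<Rightarrow> nat \<times> bool" where
  "letter_decode c = (c div 2, odd c)"

lemma letter_code_decode[simp]: "letter_code (letter_decode c) = c"
  by (simp add: letter_code_def letter_decode_def)

lemma letter_decode_code[simp]: "letter_decode (letter_code l) = l"
  by (cases l) (auto simp: letter_code_def letter_decode_def)

definition word_decode :: "nat \<Rightarrow> word" where
  "word_decode n = map letter_decode (list_decode n)"

lemma word_code_decode[simp]: "word_code (word_decode n) = n"
  by (simp add: word_code_def word_decode_def comp_def)

lemma word_decode_code[simp]: "word_decode (word_code w) = w"
  by (simp add: word_code_def word_decode_def comp_def)

lemma word_code_inj: "word_code u = word_code v \<longleftrightarrow> u = v"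
  by (metis word_decode_code)

lemma word_code_Nil[simp]: "word_code [] = 0"
  by (simp add: word_code_def)

lemma app_c_word[simp]: "app_c (word_code u) (word_code v) = word_code (u @ v)"
  by (simp add: word_code_def)

lemma cons_c_word[simp]: "cons_c (letter_code x) (word_code v) = word_code (x # v)"
  by (simp add: word_code_def)

lemma inv_c_word[simp]: "inv_c (word_code w) = word_code (word_inv w)"
proof (induction w)
  case Nil then show ?case by (simp add: inv_c_def word_code_def word_inv_def)
next
  case (Cons x w)
  have "inv_c (word_code (x # w)) = app_c (inv_c (word_code w)) (cons_c (flip_c (letter_code x)) 0)"
    by (simp add: inv_c_def word_code_def)
  also have "\<dots> = word_code (word_inv w @ [flip_letter x])"
    using Cons by (simp add: flip_c_code del: app_c_word cons_c_word)
      (metis app_c_word cons_c_word word_code_Nil)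
  finally show ?case by (simp add: word_inv_def)
qed



lemmas rfI2 = rfI rf_pfst rf_psnd rf_hd_c rf_tl_c rf_cons_c rf_drop_c rf_nth_c rf_len_c rf_app_c rf_flip_c rf_inv_c

lemma letter_code_lt: "letter_code l < 2 * k \<longleftrightarrow> fst l < k"
  by (cases l) (auto simp: letter_code_def)

definition red_c :: "nat \<Rightarrow> nat \<Rightarrow> nat" where
  "red_c k u = foldr (\<lambda>x acc. if x < 2 * k then cons_c x acc else acc) (list_decode u) 0"

lemma red_c_word: "red_c k (word_code w) = word_code (filter (\<lambda>l. fst l < k) w)"
proof (induction w)
  case Nil then show ?case by (simp add: red_c_def word_code_def)
next
  case (Cons x w)
  then show ?case
    by (auto simp: red_c_def word_code_def letter_code_lt)
qed

lemma rf_red_c1: "rf 1 (\<lambda>xs. red_c k (xs!0))"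
  unfolding red_c_def
proof -
  have "rf (Suc (Suc 1)) (\<lambda>ys. if ys!0 < 2 * k then cons_c (ys!0) (ys!1) else ys!1)"
    by (intro rfI2 | simp)+
  then show "rf 1 (\<lambda>xs. foldr (\<lambda>x acc. if x < 2 * k then cons_c x acc else acc) (list_decode (xs ! 0)) 0)"
    using rf_foldr[where S="\<lambda>x acc xs. if x < 2 * k then cons_c x acc else acc" and n=1 and C="\<lambda>xs. xs!0" and I="\<lambda>xs. 0"]
    by (simp add: rf_proj rf_const)
qed

lemma rf_red_c: "rf n A \<Longrightarrow> rf n (\<lambda>xs. red_c k (A xs))"
  by (rule rf_fun1[OF rf_red_c1]) simp_all

definition subst_c :: "nat \<Rightarrow> nat \<Rightarrow> nat" where
  "subst_c u us = foldr (\<lambda>x acc. app_c (if x mod 2 = 1 then inv_c (nth_c us (x div 2)) else nth_c us (x div 2)) acc)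
     (list_decode u) 0"

lemma rf_subst_c2: "rf 2 (\<lambda>xs. subst_c (xs!0) (xs!1))"
proof -
  have "rf (Suc (Suc 2)) (\<lambda>ys. app_c (if ys!0 mod 2 = 1 then inv_c (nth_c (drop 2 ys ! 1) (ys!0 div 2))
      else nth_c (drop 2 ys ! 1) (ys!0 div 2)) (ys!1))"
    by (intro rfI2 rf_div rf_mod | simp)+
  then show ?thesis
  unfolding subst_c_def
  using rf_foldr[where S="\<lambda>x acc xs. app_c (if x mod 2 = 1 then inv_c (nth_c (xs!1) (x div 2)) else nth_c (xs!1) (x div 2)) acc"
     and n=2 and C="\<lambda>xs. xs!0" and I="\<lambda>xs. 0"]
  by (simp add: rf_proj rf_const)
qed

lemma rf_subst_c: "rf n A \<Longrightarrow> rf n B \<Longrightarrow> rf n (\<lambda>xs. subst_c (A xs) (B xs))"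
  by (rule rf_fun2[OF rf_subst_c2]) simp_all

definition subst :: "(nat \<Rightarrow> word) \<Rightarrow> word \<Rightarrow> word" where
  "subst \<sigma> w = concat (map (\<lambda>l. if snd l then word_inv (\<sigma> (fst l)) else \<sigma> (fst l)) w)"

lemma subst_c_word: "subst_c (word_code w) us = word_code (subst (\<lambda>i. word_decode (nth_c us i)) w)"
proof (induction w)
  case Nil then show ?case by (simp add: subst_c_def subst_def word_code_def)
next
  case (Cons x w)
  have e: "letter_code x mod 2 = Suc 0 \<longleftrightarrow> snd x" "letter_code x mod 2 = 0 \<longleftrightarrow> \<not> snd x" "letter_code x div 2 = fst x"
    by (cases x; auto simp: letter_code_def)+
  have "subst_c (word_code (x # w)) us = app_c (if snd x then inv_c (nth_c us (fst x)) else nth_c us (fst x))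
     (subst_c (word_code w) us)"
    by (simp add: subst_c_def word_code_def e)
  also have "\<dots> = word_code ((if snd x then word_inv (word_decode (nth_c us (fst x))) else word_decode (nth_c us (fst x)))
      @ subst (\<lambda>i. word_decode (nth_c us i)) w)"
  proof -
    define v where "v = word_decode (nth_c us (fst x))"
    have v: "nth_c us (fst x) = word_code v" by (simp add: v_def)
    show ?thesis unfolding Cons v v_def[symmetric] by (cases "snd x") simp_all
  qed
  finally show ?case by (simp add: subst_def)
qed



definition pr1 :: "nat \<Rightarrow> nat" where "pr1 t = fst (prod_decode t)"
definition pr2 :: "nat \<Rightarrow> nat" where "pr2 t = fst (prod_decode (snd (prod_decode t)))"
definition pr3 :: "nat \<Rightarrow> nat" where "pr3 t = snd (prod_decode (snd (prod_decode t)))"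
definition trip :: "nat \<Rightarrow> nat \<Rightarrow> nat \<Rightarrow> nat" where "trip a b c = prod_encode (a, prod_encode (b, c))"

lemma pr_trip[simp]: "pr1 (trip a b c) = a" "pr2 (trip a b c) = b" "pr3 (trip a b c) = c"
  by (simp_all add: pr1_def pr2_def pr3_def trip_def)

lemma rf_pr1: "rf n A \<Longrightarrow> rf n (\<lambda>xs. pr1 (A xs))"
  unfolding pr1_def by (intro rf_pfst)
lemma rf_pr2: "rf n A \<Longrightarrow> rf n (\<lambda>xs. pr2 (A xs))"
  unfolding pr2_def by (intro rf_pfst rf_psnd)
lemma rf_pr3: "rf n A \<Longrightarrow> rf n (\<lambda>xs. pr3 (A xs))"
  unfolding pr3_def by (intro rf_psnd)

lemma rfp_comp3: "rfp 3 T \<Longrightarrow> rf n A \<Longrightarrow> rf n B \<Longrightarrow> rf n C \<Longrightarrow> rfp n (\<lambda>xs. T [A xs, B xs, C xs])"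
  unfolding rfp_def by (rule rf_comp3[where H="\<lambda>v. if T v then 1 else 0", simplified])

lemmas rfI3 = rfI2 rf_pr1 rf_pr2 rf_pr3 rfp_comp3

definition sigrep :: "recf \<Rightarrow> (nat list \<Rightarrow> bool) \<Rightarrow> bool" where
  "sigrep f T \<longleftrightarrow> rfp 3 T \<and> (\<forall>xs y. reval f xs y \<longleftrightarrow> (\<exists>t. T [list_encode xs, y, t]))"

inductive_cases Zr_inv: "reval Zr xs y"
inductive_cases Sc_inv: "reval Sc xs y"
inductive_cases Proj_inv: "reval (Proj i) xs y"
inductive_cases Cn_inv: "reval (Cn f gs) xs y"
inductive_cases Pr_inv: "reval (Pr f g) xs y"
inductive_cases Mn_inv: "reval (Mn f) xs y"

lemma list_encode_0: "list_encode xs = 0 \<longleftrightarrow> xs = []"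
  by (cases xs) auto

lemma hd_c_enc[simp]: "hd_c (Suc (prod_encode (x, c))) = x"
  by (simp add: hd_c_def)
lemma tl_c_enc'[simp]: "tl_c (Suc (prod_encode (x, c))) = c"
  by (simp add: tl_c_def)

lemma sig_Zr: "sigrep Zr (\<lambda>v. v!1 = 0)"
  unfolding sigrep_def by (auto intro!: rfI3 elim: Zr_inv intro: reval.intros)

lemma sig_Sc: "sigrep Sc (\<lambda>v. v!0 \<noteq> 0 \<and> v!1 = Suc (hd_c (v!0)))"
  unfolding sigrep_def
proof (intro conjI allI)
  show "rfp 3 (\<lambda>v. v!0 \<noteq> 0 \<and> v!1 = Suc (hd_c (v!0)))" by (intro rfI3 | simp)+
  fix xs y
  show "reval Sc xs y \<longleftrightarrow> (\<exists>t. [list_encode xs, y, t] ! 0 \<noteq> 0 \<and> [list_encode xs, y, t] ! 1 = Suc (hd_c ([list_encode xs, y, t] ! 0)))"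
    by (cases xs) (auto elim: Sc_inv intro: reval.intros)
qed

lemma sig_Proj: "sigrep (Proj i) (\<lambda>v. i < len_c (v!0) \<and> v!1 = nth_c (v!0) i)"
  unfolding sigrep_def
proof (intro conjI allI)
  show "rfp 3 (\<lambda>v. i < len_c (v!0) \<and> v!1 = nth_c (v!0) i)" by (intro rfI3 | simp)+
  fix xs y
  show "reval (Proj i) xs y \<longleftrightarrow> (\<exists>t. i < len_c ([list_encode xs, y, t] ! 0) \<and> [list_encode xs, y, t] ! 1 = nth_c ([list_encode xs, y, t] ! 0) i)"
    by (auto simp: len_c_def nth_c_enc elim: Proj_inv intro: reval.intros)
qed



lemma sig_Cn:
  assumes f: "sigrep f Tf" and gs: "\<And>j. j < length gs \<Longrightarrow> sigrep (gs!j) (Tg j)"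
  shows "sigrep (Cn f gs) (\<lambda>v. len_c (pr1 (v!2)) = length gs \<and>
      (\<forall>j<length gs. Tg j [v!0, nth_c (pr1 (v!2)) j, nth_c (pr2 (v!2)) j]) \<and> Tf [pr1 (v!2), v!1, pr3 (v!2)])"
  unfolding sigrep_def
proof (intro conjI allI)
  have tg: "\<And>j. j < length gs \<Longrightarrow> rfp 3 (Tg j)" using gs sigrep_def by blast
  have tf: "rfp 3 Tf" using f sigrep_def by blast
  show "rfp 3 (\<lambda>v. len_c (pr1 (v!2)) = length gs \<and>
      (\<forall>j<length gs. Tg j [v!0, nth_c (pr1 (v!2)) j, nth_c (pr2 (v!2)) j]) \<and> Tf [pr1 (v!2), v!1, pr3 (v!2)])"
    by (intro rfI3 rfp_all_below tg tf | simp)+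
  fix xs z
  let ?m = "length gs"
  show "reval (Cn f gs) xs z \<longleftrightarrow> (\<exists>t. len_c (pr1 ([list_encode xs, z, t]!2)) = length gs \<and>
      (\<forall>j<length gs. Tg j [[list_encode xs, z, t]!0, nth_c (pr1 ([list_encode xs, z, t]!2)) j, nth_c (pr2 ([list_encode xs, z, t]!2)) j])
      \<and> Tf [pr1 ([list_encode xs, z, t]!2), [list_encode xs, z, t]!1, pr3 ([list_encode xs, z, t]!2)])"
  proof
    assume "reval (Cn f gs) xs z"
    then obtain ys where la: "list_all2 (\<lambda>g y. reval g xs y) gs ys" and rv: "reval f ys z"
      by (rule Cn_inv) auto
    have ly: "length ys = ?m" using la list_all2_lengthD by force
    have "\<forall>j. \<exists>t. j < ?m \<longrightarrow> Tg j [list_encode xs, ys!j, t]"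
      using la gs unfolding sigrep_def list_all2_conv_all_nth by blast
    then obtain tw where tw: "\<And>j. j < ?m \<Longrightarrow> Tg j [list_encode xs, ys!j, tw j]" by metis
    obtain tf where tf: "Tf [list_encode ys, z, tf]" using rv f unfolding sigrep_def by blast
    show "\<exists>t. len_c (pr1 ([list_encode xs, z, t]!2)) = length gs \<and>
      (\<forall>j<length gs. Tg j [[list_encode xs, z, t]!0, nth_c (pr1 ([list_encode xs, z, t]!2)) j, nth_c (pr2 ([list_encode xs, z, t]!2)) j])
      \<and> Tf [pr1 ([list_encode xs, z, t]!2), [list_encode xs, z, t]!1, pr3 ([list_encode xs, z, t]!2)]"
      by (rule exI[of _ "trip (list_encode ys) (list_encode (map tw [0..<?m])) tf"])
         (simp add: len_c_def ly nth_c_enc tw tf)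
  next
    assume "\<exists>t. len_c (pr1 ([list_encode xs, z, t]!2)) = length gs \<and>
      (\<forall>j<length gs. Tg j [[list_encode xs, z, t]!0, nth_c (pr1 ([list_encode xs, z, t]!2)) j, nth_c (pr2 ([list_encode xs, z, t]!2)) j])
      \<and> Tf [pr1 ([list_encode xs, z, t]!2), [list_encode xs, z, t]!1, pr3 ([list_encode xs, z, t]!2)]"
    then obtain t where a: "len_c (pr1 t) = ?m" "\<And>j. j < ?m \<Longrightarrow> Tg j [list_encode xs, nth_c (pr1 t) j, nth_c (pr2 t) j]"
      "Tf [pr1 t, z, pr3 t]" by auto
    define ys where "ys = list_decode (pr1 t)"
    have ly: "length ys = ?m" using a(1) by (simp add: ys_def len_c_def)
    have "reval (gs!j) xs (ys!j)" if "j < ?m" for j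
      using a(2)[OF that] gs[OF that] that ly unfolding sigrep_def ys_def
      by (metis nth_c_dec)
    then have la: "list_all2 (\<lambda>g y. reval g xs y) gs ys"
      using ly by (simp add: list_all2_conv_all_nth)
    have "reval f ys z" using a(3) f unfolding sigrep_def ys_def by auto
    then show "reval (Cn f gs) xs z" using la by (rule reval.comp[rotated])
  qed
qed



inductive_cases Pr0_inv: "reval (Pr f g) (0 # xs) y"
inductive_cases PrS_inv: "reval (Pr f g) (Suc n # xs) y"
inductive_cases PrN_inv: "reval (Pr f g) [] y"

lemma pr_char:
  "reval (Pr f g) (n # xs) y \<longleftrightarrow> (\<exists>vs. length vs = Suc n \<and> reval f xs (vs!0) \<and>
      (\<forall>i<n. reval g (i # vs!i # xs) (vs!Suc i)) \<and> y = vs!n)"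
proof (induction n arbitrary: y)
  case 0
  show ?case
  proof
    assume "reval (Pr f g) (0 # xs) y"
    then have "reval f xs y" by (rule Pr0_inv)
    then show "\<exists>vs. length vs = Suc 0 \<and> reval f xs (vs!0) \<and> (\<forall>i<0. reval g (i # vs!i # xs) (vs!Suc i)) \<and> y = vs!0"
      by (intro exI[of _ "[y]"]) simp
  next
    assume "\<exists>vs. length vs = Suc 0 \<and> reval f xs (vs!0) \<and> (\<forall>i<0. reval g (i # vs!i # xs) (vs!Suc i)) \<and> y = vs!0"
    then show "reval (Pr f g) (0 # xs) y" by (auto intro: reval.pr0)
  qed
next
  case (Suc n)
  show ?case
  proof
    assume "reval (Pr f g) (Suc n # xs) y"
    then obtain y0 where a: "reval (Pr f g) (n # xs) y0" "reval g (n # y0 # xs) y" by (rule PrS_inv)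
    obtain vs where vs: "length vs = Suc n" "reval f xs (vs!0)" "\<forall>i<n. reval g (i # vs!i # xs) (vs!Suc i)" "y0 = vs!n"
      using Suc.IH a(1) by blast
    show "\<exists>vs. length vs = Suc (Suc n) \<and> reval f xs (vs!0) \<and> (\<forall>i<Suc n. reval g (i # vs!i # xs) (vs!Suc i)) \<and> y = vs!Suc n"
    proof (intro exI[of _ "vs @ [y]"] conjI)
      show "\<forall>i<Suc n. reval g (i # (vs @ [y])!i # xs) ((vs @ [y])!Suc i)"
        using vs a(2) by (auto simp: nth_append less_Suc_eq)
    qed (use vs in \<open>auto simp: nth_append\<close>)
  next
    assume "\<exists>vs. length vs = Suc (Suc n) \<and> reval f xs (vs!0) \<and> (\<forall>i<Suc n. reval g (i # vs!i # xs) (vs!Suc i)) \<and> y = vs!Suc n"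
    then obtain vs where vs: "length vs = Suc (Suc n)" "reval f xs (vs!0)" "\<forall>i<Suc n. reval g (i # vs!i # xs) (vs!Suc i)" "y = vs!Suc n"
      by blast
    have "reval (Pr f g) (n # xs) (vs!n)"
      using Suc.IH[of "vs!n"] vs by (intro iffD2[OF Suc.IH] exI[of _ "take (Suc n) vs"]) auto
    then show "reval (Pr f g) (Suc n # xs) y"
      using vs by (auto intro: reval.prS)
  qed
qed



definition TPr :: "(nat list \<Rightarrow> bool) \<Rightarrow> (nat list \<Rightarrow> bool) \<Rightarrow> nat list \<Rightarrow> bool" where
  "TPr Tf Tg = (\<lambda>v. v!0 \<noteq> 0 \<and> len_c (pr1 (v!2)) = Suc (hd_c (v!0)) \<and>
     Tf [tl_c (v!0), nth_c (pr1 (v!2)) 0, pr3 (v!2)] \<and>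
     (\<forall>i<hd_c (v!0). Tg [cons_c i (cons_c (nth_c (pr1 (v!2)) i) (tl_c (v!0))), nth_c (pr1 (v!2)) (Suc i), nth_c (pr2 (v!2)) i]) \<and>
     v!1 = nth_c (pr1 (v!2)) (hd_c (v!0)))"

lemma hd_c_enc2: "hd_c (list_encode (x # xs)) = x" by simp
lemma tl_c_enc2: "tl_c (list_encode (x # xs)) = list_encode xs" by simp
lemma enc_nz: "0 < list_encode (x # xs)" by simp

lemma sig_Pr:
  assumes f: "sigrep f Tf" and g: "sigrep g Tg"
  shows "sigrep (Pr f g) (TPr Tf Tg)"
  unfolding sigrep_def
proof (intro conjI allI)
  have tg: "rfp 3 Tg" using g sigrep_def by blast
  have tf: "rfp 3 Tf" using f sigrep_def by blast
  show "rfp 3 (TPr Tf Tg)" unfolding TPr_def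
    by (intro rfI3 rfp_ball tg tf | simp)+
  fix xs y
  show "reval (Pr f g) xs y \<longleftrightarrow> (\<exists>t. TPr Tf Tg [list_encode xs, y, t])"
  proof (cases xs)
    case Nil then show ?thesis by (auto simp: TPr_def elim: PrN_inv)
  next
    case (Cons n xs')
    have "reval (Pr f g) xs y \<longleftrightarrow> (\<exists>vs. length vs = Suc n \<and> reval f xs' (vs!0) \<and>
      (\<forall>i<n. reval g (i # vs!i # xs') (vs!Suc i)) \<and> y = vs!n)" unfolding Cons by (rule pr_char)
    also have "\<dots> \<longleftrightarrow> (\<exists>t. TPr Tf Tg [list_encode xs, y, t])"
    proof
      assume "\<exists>vs. length vs = Suc n \<and> reval f xs' (vs!0) \<and> (\<forall>i<n. reval g (i # vs!i # xs') (vs!Suc i)) \<and> y = vs!n"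
      then obtain vs where vs: "length vs = Suc n" "reval f xs' (vs!0)" "\<forall>i<n. reval g (i # vs!i # xs') (vs!Suc i)" "y = vs!n"
        by blast
      obtain t0 where t0: "Tf [list_encode xs', vs!0, t0]" using vs(2) f sigrep_def by blast
      have "\<forall>i. \<exists>t. i < n \<longrightarrow> Tg [list_encode (i # vs!i # xs'), vs!Suc i, t]"
        using vs(3) g unfolding sigrep_def by blast
      then obtain tw where tw: "\<And>i. i < n \<Longrightarrow> Tg [list_encode (i # vs!i # xs'), vs!Suc i, tw i]" by metis
      show "\<exists>t. TPr Tf Tg [list_encode xs, y, t]"
        by (rule exI[of _ "trip (list_encode vs) (list_encode (map tw [0..<n])) t0"])
          (use vs t0 tw in \<open>simp add: TPr_def Cons len_c_def nth_c_enc hd_c_enc2 tl_c_enc2 enc_nz del: list_encode.simps\<close>)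
    next
      assume "\<exists>t. TPr Tf Tg [list_encode xs, y, t]"
      then obtain t where a: "len_c (pr1 t) = Suc n" "Tf [list_encode xs', nth_c (pr1 t) 0, pr3 t]"
        "\<And>i. i < n \<Longrightarrow> Tg [list_encode (i # nth_c (pr1 t) i # xs'), nth_c (pr1 t) (Suc i), nth_c (pr2 t) i]"
        "y = nth_c (pr1 t) n"
        by (auto simp: TPr_def Cons cons_c_def)
      define vs where "vs = list_decode (pr1 t)"
      have lv: "length vs = Suc n" using a(1) by (simp add: vs_def len_c_def)
      have nv: "\<And>i. i < Suc n \<Longrightarrow> nth_c (pr1 t) i = vs!i" using lv by (simp add: vs_def nth_c_dec)
      show "\<exists>vs. length vs = Suc n \<and> reval f xs' (vs!0) \<and> (\<forall>i<n. reval g (i # vs!i # xs') (vs!Suc i)) \<and> y = vs!n"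
      proof (intro exI[of _ vs] conjI allI impI)
        show "reval f xs' (vs!0)" using a(2) f nv[of 0] sigrep_def by auto
        show "reval g (i # vs!i # xs') (vs!Suc i)" if "i < n" for i
          using a(3)[OF that] g nv[of i] nv[of "Suc i"] that sigrep_def by auto
      qed (use lv a(4) nv in auto)
    qed
    finally show ?thesis .
  qed
qed



definition TMn :: "(nat list \<Rightarrow> bool) \<Rightarrow> nat list \<Rightarrow> bool" where
  "TMn Tf = (\<lambda>v. Tf [cons_c (v!1) (v!0), 0, pr1 (v!2)] \<and>
     (\<forall>m<v!1. nth_c (pr2 (v!2)) m \<noteq> 0 \<and> Tf [cons_c m (v!0), nth_c (pr2 (v!2)) m, nth_c (pr3 (v!2)) m]))"

lemma mn_char: "reval (Mn f) xs n \<longleftrightarrow> reval f (n # xs) 0 \<and> (\<forall>m<n. \<exists>y. reval f (m # xs) y \<and> y \<noteq> 0)"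
  by (auto elim: Mn_inv intro: reval.mn)

lemma sig_Mn:
  assumes f: "sigrep f Tf"
  shows "sigrep (Mn f) (TMn Tf)"
  unfolding sigrep_def
proof (intro conjI allI)
  have tf: "rfp 3 Tf" using f sigrep_def by blast
  show "rfp 3 (TMn Tf)" unfolding TMn_def
    by (intro rfI3 rfp_ball tf | simp)+
  fix xs n
  show "reval (Mn f) xs n \<longleftrightarrow> (\<exists>t. TMn Tf [list_encode xs, n, t])"
    unfolding mn_char
  proof
    assume a: "reval f (n # xs) 0 \<and> (\<forall>m<n. \<exists>y. reval f (m # xs) y \<and> y \<noteq> 0)"
    obtain t0 where t0: "Tf [list_encode (n # xs), 0, t0]" using a f sigrep_def by blast
    have "\<forall>m. \<exists>y. m < n \<longrightarrow> reval f (m # xs) y \<and> y \<noteq> 0" using a by blast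
    then obtain ys where ys: "\<And>m. m < n \<Longrightarrow> reval f (m # xs) (ys m) \<and> ys m \<noteq> 0" by metis
    have "\<forall>m. \<exists>t. m < n \<longrightarrow> Tf [list_encode (m # xs), ys m, t]" using ys f sigrep_def by blast
    then obtain ts where ts: "\<And>m. m < n \<Longrightarrow> Tf [list_encode (m # xs), ys m, ts m]" by metis
    show "\<exists>t. TMn Tf [list_encode xs, n, t]"
      by (rule exI[of _ "trip t0 (list_encode (map ys [0..<n])) (list_encode (map ts [0..<n]))"])
        (use t0 ys ts in \<open>simp add: TMn_def nth_c_enc del: list_encode.simps\<close>)
  next
    assume "\<exists>t. TMn Tf [list_encode xs, n, t]"
    then obtain t where a: "Tf [list_encode (n # xs), 0, pr1 t]"
      "\<And>m. m < n \<Longrightarrow> nth_c (pr2 t) m \<noteq> 0 \<and> Tf [list_encode (m # xs), nth_c (pr2 t) m, nth_c (pr3 t) m]"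
      by (auto simp: TMn_def simp del: list_encode.simps)
    have fe: "\<And>xs y. reval f xs y \<longleftrightarrow> (\<exists>t. Tf [list_encode xs, y, t])" using f sigrep_def by blast
    show "reval f (n # xs) 0 \<and> (\<forall>m<n. \<exists>y. reval f (m # xs) y \<and> y \<noteq> 0)"
    proof (intro conjI allI impI)
      show "reval f (n # xs) 0" using a(1) fe by blast
      fix m assume "m < n"
      then show "\<exists>y. reval f (m # xs) y \<and> y \<noteq> 0" using a(2)[of m] fe by blast
    qed
  qed
qed

lemma sig_exists: "\<exists>T. sigrep f T"
proof (induction f)
  case Zr then show ?case using sig_Zr by blast
next
  case Sc then show ?case using sig_Sc by blast
next
  case (Proj i) then show ?case using sig_Proj by blast
next
  case (Cn f gs)
  obtain Tf where Tf: "sigrep f Tf" using Cn.IH(1) by blast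
  define Tg where "Tg = (\<lambda>j. SOME T. sigrep (gs!j) T)"
  have tg: "sigrep (gs!j) (Tg j)" if "j < length gs" for j
  proof -
    have "gs!j \<in> set gs" using that by simp
    then obtain T where "sigrep (gs!j) T" using Cn.IH(2) by blast
    then show ?thesis unfolding Tg_def by (rule someI[of "sigrep (gs!j)" T])
  qed
  show ?case
    apply (rule exI)
    apply (rule sig_Cn[OF Tf])
    apply (erule tg)
    done
next
  case (Pr f g)
  obtain Tf Tg where "sigrep f Tf" "sigrep g Tg" using Pr.IH by blast
  then show ?case by (blast intro: sig_Pr)
next
  case (Mn f)
  obtain Tf where "sigrep f Tf" using Mn.IH by blast
  then show ?case by (blast intro: sig_Mn)
qed

definition sig1 :: "nat set \<Rightarrow> bool" where
  "sig1 A \<longleftrightarrow> (\<exists>P. rfp 2 P \<and> (\<forall>n. n \<in> A \<longleftrightarrow> (\<exists>t. P [n, t])))"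

lemma rfp_comp2: "rfp 2 T \<Longrightarrow> rf n A \<Longrightarrow> rf n B \<Longrightarrow> rfp n (\<lambda>xs. T [A xs, B xs])"
  unfolding rfp_def by (rule rf_comp2[where H="\<lambda>v. if T v then 1 else 0", simplified])

lemma rfp_comp1: "rfp 1 T \<Longrightarrow> rf n A \<Longrightarrow> rfp n (\<lambda>xs. T [A xs])"
  unfolding rfp_def using rf_comp1[where H="\<lambda>v. if T v then 1 else 0"] by simp

lemma re_sig1: "re_set A \<Longrightarrow> sig1 A"
proof -
  assume "re_set A"
  then obtain f where f: "\<And>n. n \<in> A \<longleftrightarrow> (\<exists>y. reval f [n] y)" unfolding re_set_def by blast
  obtain T where T: "sigrep f T" using sig_exists by blast
  have rT: "rfp 3 T" using T sigrep_def by blast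
  show "sig1 A" unfolding sig1_def
  proof (rule exI[of _ "\<lambda>v. T [cons_c (v!0) 0, pr1 (v!1), pr2 (v!1)]"], intro conjI allI)
    show "rfp 2 (\<lambda>v. T [cons_c (v!0) 0, pr1 (v!1), pr2 (v!1)])"
      by (intro rfI3 rT | simp)+
    fix n
    have e: "cons_c n 0 = list_encode [n]" by (simp add: cons_c_def)
    show "n \<in> A \<longleftrightarrow> (\<exists>t. T [cons_c ([n, t]!0) 0, pr1 ([n, t]!1), pr2 ([n, t]!1)])"
    proof -
      have fe: "\<And>xs y. reval f xs y \<longleftrightarrow> (\<exists>t. T [list_encode xs, y, t])" using T sigrep_def by blast
      have "n \<in> A \<longleftrightarrow> (\<exists>y t. T [cons_c n 0, y, t])" unfolding e using f fe by blast
      also have "\<dots> \<longleftrightarrow> (\<exists>t. T [cons_c n 0, pr1 t, pr2 t])"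
      proof
        assume "\<exists>y t. T [cons_c n 0, y, t]"
        then obtain y t where "T [cons_c n 0, y, t]" by blast
        then show "\<exists>t. T [cons_c n 0, pr1 t, pr2 t]" by (intro exI[of _ "trip y t 0"]) simp
      qed blast
      finally show ?thesis by simp
    qed
  qed
qed



lemma decide: assumes "sig1 A" "sig1 (- A)" shows "computable_set A"
proof -
  obtain P1 where P1: "rfp 2 P1" "\<forall>n. n \<in> A \<longleftrightarrow> (\<exists>t. P1 [n, t])" using assms(1) unfolding sig1_def by (elim exE conjE)
  obtain P2 where P2': "rfp 2 P2" "\<forall>n. n \<in> - A \<longleftrightarrow> (\<exists>t. P2 [n, t])" using assms(2) unfolding sig1_def by (elim exE conjE)
  have P2: "rfp 2 P2" "\<forall>n. n \<notin> A \<longleftrightarrow> (\<exists>t. P2 [n, t])" using P2' by auto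
  have m: "rf 1 (\<lambda>xs. LEAST t. P1 [xs!0, t] \<or> P2 [xs!0, t])"
  proof (rule rf_least)
    show "rfp (Suc 1) (\<lambda>ys. P1 [drop 1 ys ! 0, ys!0] \<or> P2 [drop 1 ys ! 0, ys!0])"
      by (intro rfp_or rfp_comp2 P1(1) P2(1) rf_drop_nth rf_proj; simp)
    show "\<exists>m. P1 [xs!0, m] \<or> P2 [xs!0, m]" for xs using P1(2) P2(2) by blast
  qed
  have "rf 1 (\<lambda>xs. if P1 [xs!0, LEAST t. P1 [xs!0, t] \<or> P2 [xs!0, t]] then 1 else 0)"
    using rf_if[OF rfp_comp2[OF P1(1) rf_proj m] rf_const rf_const] by simp
  then have r: "rf 1 (\<lambda>xs. if xs!0 \<in> A then 1 else 0)"
  proof (rule rf_cong)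
    fix xs :: "nat list"
    let ?t = "LEAST t. P1 [xs!0, t] \<or> P2 [xs!0, t]"
    have "P1 [xs!0, ?t] \<or> P2 [xs!0, ?t]" by (rule LeastI_ex) (use P1(2) P2(2) in blast)
    then show "(if P1 [xs!0, ?t] then 1 else 0) = (if xs!0 \<in> A then 1 else (0::nat))"
      using P1(2) P2(2) by auto
  qed
  show ?thesis unfolding computable_set_def
  proof -
    obtain f where f: "\<And>xs. length xs = 1 \<Longrightarrow> reval f xs (if xs!0 \<in> A then 1 else 0)"
      using r unfolding rf_def by blast
    show "\<exists>f. \<forall>n. reval f [n] (if n \<in> A then 1 else 0)"
    proof (intro exI[of _ f] allI)
      fix n show "reval f [n] (if n \<in> A then 1 else 0)" using f[of "[n]"] by simp
    qed
  qed
qed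



lemma eval_word_Nil[simp]: "eval_word G a [] = \<one>\<^bsub>G\<^esub>"
  by (simp add: eval_word_def)

lemma eval_word_Cons: "eval_word G a (l # w) =
   (if snd l then inv\<^bsub>G\<^esub> (a (fst l)) else a (fst l)) \<otimes>\<^bsub>G\<^esub> eval_word G a w"
  by (simp add: eval_word_def)

lemma eval_word_cong: "(\<And>l. l \<in> set w \<Longrightarrow> a (fst l) = b (fst l)) \<Longrightarrow> eval_word G a w = eval_word G b w"
  by (induction w) (auto simp: eval_word_Cons)

context group
begin

lemma eval_word_closed: "(\<And>i. a i \<in> carrier G) \<Longrightarrow> eval_word G a w \<in> carrier G"
  by (induction w) (auto simp: eval_word_Cons)

lemma eval_word_append: "(\<And>i. a i \<in> carrier G) \<Longrightarrow> eval_word G a (u @ v) = eval_word G a u \<otimes> eval_word G a v"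
  by (induction u) (auto simp: eval_word_Cons eval_word_closed m_assoc)

lemma eval_word_inv: "(\<And>i. a i \<in> carrier G) \<Longrightarrow> eval_word G a (word_inv u) = inv (eval_word G a u)"
proof (induction u)
  case Nil then show ?case by (simp add: word_inv_def)
next
  case (Cons l u)
  have "eval_word G a (word_inv (l # u)) = eval_word G a (word_inv u @ [flip_letter l])"
    by (simp add: word_inv_def)
  also have "\<dots> = inv (eval_word G a u) \<otimes> eval_word G a [flip_letter l]"
    using Cons by (simp add: eval_word_append)
  also have "\<dots> = inv ((if snd l then inv (a (fst l)) else a (fst l)) \<otimes> eval_word G a u)"
    using Cons.prems by (simp add: eval_word_Cons flip_letter_def inv_mult_group eval_word_closed)
  finally show ?case by (simp add: eval_word_Cons)
qed

lemma eval_word_letter_flip: "(\<And>i. a i \<in> carrier G) \<Longrightarrow> eval_word G a [x, flip_letter x] = \<one>"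
  by (simp add: eval_word_Cons flip_letter_def)

lemma ncl_vanish:
  assumes a: "\<And>i. a i \<in> carrier G" and R: "\<And>r. r \<in> R \<Longrightarrow> eval_word G a r = \<one>"
    and w: "w \<in> normal_closure_words k R"
  shows "eval_word G a w = \<one>"
  using w
proof (induction rule: normal_closure_words.induct)
  case (rel w) then show ?case using R by blast
next
  case empty then show ?case by simp
next
  case (mult u v) then show ?case using a by (simp add: eval_word_append)
next
  case (inv u) then show ?case using a by (simp add: eval_word_inv)
next
  case (conj u x)
  then show ?case using a
    by (simp add: eval_word_append eval_word_Cons flip_letter_def)
next
  case (ins u v x)
  have "eval_word G a (u @ [x, flip_letter x] @ v) = eval_word G a u \<otimes> eval_word G a [x, flip_letter x] \<otimes> eval_word G a v"
    using a by (simp add: eval_word_append eval_word_closed m_assoc del: append.simps)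
  also have "\<dots> = eval_word G a (u @ v)"
    using a by (simp add: eval_word_letter_flip eval_word_append eval_word_closed del: append.simps)
  finally show ?case using ins by simp
next
  case (del u x v)
  have "eval_word G a (u @ [x, flip_letter x] @ v) = eval_word G a u \<otimes> eval_word G a [x, flip_letter x] \<otimes> eval_word G a v"
    using a by (simp add: eval_word_append eval_word_closed m_assoc del: append.simps)
  also have "\<dots> = eval_word G a (u @ v)"
    using a by (simp add: eval_word_letter_flip eval_word_append eval_word_closed del: append.simps)
  finally show ?case using del by simp
qed

lemma generate_words:
  assumes bc: "\<And>i. b i \<in> carrier G" and x: "x \<in> generate G (range b)"
  shows "\<exists>u. eval_word G b u = x"
  using x
proof (induction rule: generate.induct)
  case one then show ?case by (intro exI[of _ "[]"]) simp
next
  case (incl h) then obtain i where "h = b i" by blast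
  then show ?case using bc by (intro exI[of _ "[(i, False)]"]) (simp add: eval_word_Cons)
next
  case (inv h) then obtain i where "h = b i" by blast
  then show ?case using bc by (intro exI[of _ "[(i, True)]"]) (simp add: eval_word_Cons)
next
  case (eng h1 h2)
  then obtain u1 u2 where "eval_word G b u1 = h1" "eval_word G b u2 = h2" by blast
  then show ?case using bc by (intro exI[of _ "u1 @ u2"]) (simp add: eval_word_append)
qed

end



lemma hom_eval:
  assumes "group G" "group H" "\<phi> \<in> hom H G" "\<And>i. g i \<in> carrier H"
  shows "\<phi> (eval_word H g w) = eval_word G (\<lambda>i. \<phi> (g i)) w"
proof (induction w)
  case Nil then show ?case using assms hom_one by simp
next
  case (Cons l w)
  have gh: "group_hom H G \<phi>" using assms by (simp add: group_hom_def group_hom_axioms_def)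
  have c: "eval_word H g w \<in> carrier H" using assms group.eval_word_closed by metis
  show ?case using Cons assms c
    by (simp add: eval_word_Cons hom_mult group_hom.hom_inv[OF gh] group.inv_closed)
qed

lemma eval_subst:
  assumes "group G" "\<And>i. b i \<in> carrier G"
  shows "eval_word G b (subst \<sigma> w) = eval_word G (\<lambda>i. eval_word G b (\<sigma> i)) w"
proof (induction w)
  case Nil then show ?case by (simp add: subst_def)
next
  case (Cons l w)
  have "subst \<sigma> (l # w) = (if snd l then word_inv (\<sigma> (fst l)) else \<sigma> (fst l)) @ subst \<sigma> w"
    by (simp add: subst_def)
  then show ?case using Cons assms
    by (simp add: group.eval_word_append group.eval_word_inv eval_word_Cons)
qed

lemma eval_filter:
  assumes "group H" "\<And>i. i < k \<Longrightarrow> g i \<in> carrier H"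
  shows "eval_word H (\<lambda>i. if i < k then g i else \<one>\<^bsub>H\<^esub>) w = eval_word H g (filter (\<lambda>l. fst l < k) w)"
proof (induction w)
  case Nil then show ?case by simp
next
  case (Cons l w)
  have c: "eval_word H g (filter (\<lambda>l. fst l < k) w) \<in> carrier H"
  proof -
    have "eval_word H g (filter (\<lambda>l. fst l < k) w) = eval_word H (\<lambda>i. if i < k then g i else \<one>\<^bsub>H\<^esub>) (filter (\<lambda>l. fst l < k) w)"
      by (rule eval_word_cong) auto
    then show ?thesis using assms group.eval_word_closed[of H "\<lambda>i. if i < k then g i else \<one>\<^bsub>H\<^esub>"]
      by (simp add: group.is_monoid monoid.one_closed)
  qed
  show ?case using Cons assms c by (auto simp: eval_word_Cons group.is_monoid monoid.l_one monoid.inv_one)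
qed

lemma eval_eqn_Inr: "eval_eqn G as (map Inr r) = eval_word G (\<lambda>i. as ! i) r"
  by (induction r) (auto simp: eval_eqn_def eval_word_def)



definition step_ok :: "nat \<Rightarrow> word set \<Rightarrow> word set \<Rightarrow> word \<Rightarrow> bool" where
  "step_ok k R P w \<longleftrightarrow> w \<in> R \<or> w = [] \<or> (\<exists>u\<in>P. \<exists>v\<in>P. w = u @ v) \<or> (\<exists>u\<in>P. w = word_inv u) \<or>
     (\<exists>u\<in>P. \<exists>x. fst x < k \<and> w = [x] @ u @ [flip_letter x]) \<or>
     (\<exists>u v x. u @ v \<in> P \<and> fst x < k \<and> w = u @ [x, flip_letter x] @ v) \<or>
     (\<exists>u v x. u @ [x, flip_letter x] @ v \<in> P \<and> w = u @ v)"

definition deriv :: "nat \<Rightarrow> word set \<Rightarrow> word list \<Rightarrow> bool" where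
  "deriv k R ws \<longleftrightarrow> (\<forall>j<length ws. step_ok k R (set (take j ws)) (ws!j))"

lemma step_ok_mono: "step_ok k R P w \<Longrightarrow> P \<subseteq> P' \<Longrightarrow> step_ok k R P' w"
  unfolding step_ok_def by blast

lemma deriv_append: "deriv k R A \<Longrightarrow> deriv k R B \<Longrightarrow> deriv k R (A @ B)"
  unfolding deriv_def
proof (intro allI impI)
  fix j assume a: "\<forall>j<length A. step_ok k R (set (take j A)) (A ! j)"
    "\<forall>j<length B. step_ok k R (set (take j B)) (B ! j)" and j: "j < length (A @ B)"
  show "step_ok k R (set (take j (A @ B))) ((A @ B) ! j)"
  proof (cases "j < length A")
    case True then show ?thesis using a(1) by (simp add: nth_append)
  next
    case False
    then have "step_ok k R (set (take (j - length A) B)) (B ! (j - length A))" using a(2) j by auto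
    then show ?thesis using False by (auto simp: nth_append intro: step_ok_mono)
  qed
qed

lemma deriv_snoc: "deriv k R ws \<Longrightarrow> step_ok k R (set ws) w \<Longrightarrow> deriv k R (ws @ [w])"
  unfolding deriv_def by (auto simp: nth_append less_Suc_eq)

lemma deriv_sound:
  assumes "deriv k R ws" "R \<subseteq> words_over k"
  shows "\<forall>j<length ws. ws!j \<in> normal_closure_words k R"
proof (intro allI impI)
  fix j show "j < length ws \<Longrightarrow> ws!j \<in> normal_closure_words k R"
  proof (induction j rule: less_induct)
    case (less j)
    have P: "set (take j ws) \<subseteq> normal_closure_words k R"
      using less by (auto simp: set_conv_nth)
    have "step_ok k R (set (take j ws)) (ws!j)" using assms less.prems deriv_def by blast
    then show ?case using P unfolding step_ok_def
      apply (elim disjE bexE exE conjE)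
      apply (simp add: normal_closure_words.rel)
      apply (simp add: normal_closure_words.empty)
      apply (metis subsetD normal_closure_words.mult)
      apply (metis subsetD normal_closure_words.inv)
      apply (metis subsetD normal_closure_words.conj)
      apply (metis subsetD normal_closure_words.ins)
      apply (metis subsetD normal_closure_words.del)
      done
  qed
qed

lemma ncl_deriv:
  assumes "w \<in> normal_closure_words k R"
  shows "\<exists>ws. deriv k R ws \<and> w \<in> set ws"
  using assms
proof (induction rule: normal_closure_words.induct)
  case (rel w) then show ?case by (intro exI[of _ "[w]"]) (simp add: deriv_def step_ok_def)
next
  case empty then show ?case by (intro exI[of _ "[[]]"]) (simp add: deriv_def step_ok_def)
next
  case (mult u v)
  then obtain A B where "deriv k R A" "u \<in> set A" "deriv k R B" "v \<in> set B" by blast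
  moreover have "deriv k R (A @ B)" using calculation by (intro deriv_append)
  ultimately have "deriv k R ((A @ B) @ [u @ v])" by (intro deriv_snoc) (auto simp: step_ok_def)
  then show ?case by (intro exI[of _ "(A @ B) @ [u @ v]"]) simp
next
  case (inv u)
  then obtain A where "deriv k R A" "u \<in> set A" by blast
  then show ?case
    by (intro exI[of _ "A @ [word_inv u]"]) (auto intro!: deriv_snoc simp: step_ok_def)
next
  case (conj u x)
  then obtain A where "deriv k R A" "u \<in> set A" by blast
  moreover have "step_ok k R (set A) ([x] @ u @ [flip_letter x])"
    unfolding step_ok_def using calculation conj.hyps(2) by blast
  ultimately have "deriv k R (A @ [[x] @ u @ [flip_letter x]])" by (intro deriv_snoc)
  then show ?case by (intro exI[of _ "A @ [[x] @ u @ [flip_letter x]]"]) simp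
next
  case (ins u v x)
  then obtain A where "deriv k R A" "u @ v \<in> set A" by blast
  moreover have "step_ok k R (set A) (u @ [x, flip_letter x] @ v)"
    unfolding step_ok_def using calculation ins.hyps(2) by blast
  ultimately have "deriv k R (A @ [u @ [x, flip_letter x] @ v])" by (intro deriv_snoc)
  then show ?case by (intro exI[of _ "A @ [u @ [x, flip_letter x] @ v]"]) simp
next
  case (del u x v)
  then obtain A where "deriv k R A" "u @ [x, flip_letter x] @ v \<in> set A" by blast
  moreover have "step_ok k R (set A) (u @ v)"
    unfolding step_ok_def using calculation by blast
  ultimately have "deriv k R (A @ [u @ v])" by (intro deriv_snoc)
  then show ?case by (intro exI[of _ "A @ [u @ v]"]) simp
qed

lemma ncl_iff: "R \<subseteq> words_over k \<Longrightarrow> w \<in> normal_closure_words k R \<longleftrightarrow> (\<exists>ws. deriv k R ws \<and> w \<in> set ws)"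
  using ncl_deriv deriv_sound by (metis in_set_conv_nth)



lemma word_decode_app_c: "word_decode (app_c u v) = word_decode u @ word_decode v"
  by (metis app_c_word word_code_decode word_decode_code)
lemma word_decode_inv_c: "word_decode (inv_c u) = word_inv (word_decode u)"
  by (metis inv_c_word word_code_decode word_decode_code)
lemma word_decode_cons_c: "word_decode (cons_c x u) = letter_decode x # word_decode u"
  by (metis cons_c_word letter_code_decode word_code_decode word_decode_code)
lemma word_decode_0: "word_decode 0 = []"
  by (simp add: word_decode_def)
lemma flip_c_decode: "flip_c x = letter_code (flip_letter (letter_decode x))"
  by (metis flip_c_code letter_code_decode)
lemma letter_decode_lt: "x < 2 * k \<Longrightarrow> fst (letter_decode x) < k"
  by (metis letter_code_decode letter_code_lt)

definition su :: "nat \<Rightarrow> nat" where "su s = pr1 (pr2 s)"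
definition sv :: "nat \<Rightarrow> nat" where "sv s = pr2 (pr2 s)"
definition sx :: "nat \<Rightarrow> nat" where "sx s = pr3 (pr2 s)"
definition sy :: "nat \<Rightarrow> nat" where "sy s = fst (prod_decode (pr3 s))"
definition st :: "nat \<Rightarrow> nat" where "st s = snd (prod_decode (pr3 s))"
definition mks :: "nat \<Rightarrow> nat \<Rightarrow> nat \<Rightarrow> nat \<Rightarrow> nat \<Rightarrow> nat \<Rightarrow> nat" where
  "mks w u v x y t = trip w (trip u v x) (prod_encode (y, t))"

lemma mks_sel[simp]: "pr1 (mks w u v x y t) = w" "su (mks w u v x y t) = u" "sv (mks w u v x y t) = v"
  "sx (mks w u v x y t) = x" "sy (mks w u v x y t) = y" "st (mks w u v x y t) = t"
  by (simp_all add: mks_def su_def sv_def sx_def sy_def st_def)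

lemma rf_sel: "rf n A \<Longrightarrow> rf n (\<lambda>xs. su (A xs))" "rf n A \<Longrightarrow> rf n (\<lambda>xs. sv (A xs))"
  "rf n A \<Longrightarrow> rf n (\<lambda>xs. sx (A xs))" "rf n A \<Longrightarrow> rf n (\<lambda>xs. sy (A xs))" "rf n A \<Longrightarrow> rf n (\<lambda>xs. st (A xs))"
  unfolding su_def sv_def sx_def sy_def st_def by (intro rfI3 rf_pfst rf_psnd; assumption)+

definition okc :: "(nat list \<Rightarrow> bool) \<Rightarrow> nat \<Rightarrow> (nat \<Rightarrow> bool) \<Rightarrow> nat \<Rightarrow> bool" where
  "okc TR k Q s \<longleftrightarrow> TR [cons_c (pr1 s) 0, sy s, st s] \<or> pr1 s = 0 \<or>
     (Q (su s) \<and> Q (sv s) \<and> pr1 s = app_c (su s) (sv s)) \<or>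
     (Q (su s) \<and> pr1 s = inv_c (su s)) \<or>
     (Q (su s) \<and> sx s < 2 * k \<and> pr1 s = cons_c (sx s) (app_c (su s) (cons_c (flip_c (sx s)) 0))) \<or>
     (Q (app_c (su s) (sv s)) \<and> sx s < 2 * k \<and> pr1 s = app_c (su s) (cons_c (sx s) (cons_c (flip_c (sx s)) (sv s)))) \<or>
     (Q (app_c (su s) (cons_c (sx s) (cons_c (flip_c (sx s)) (sv s)))) \<and> pr1 s = app_c (su s) (sv s))"

lemma okc_mono: "okc TR k Q s \<Longrightarrow> (\<And>z. Q z \<Longrightarrow> Q' z) \<Longrightarrow> okc TR k Q' s"
  unfolding okc_def by blast

lemma okc_sound:
  assumes R: "\<And>n y t. TR [cons_c n 0, y, t] \<Longrightarrow> word_decode n \<in> R"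
    and Q: "\<And>z. Q z \<Longrightarrow> word_decode z \<in> P" and ok: "okc TR k Q s"
  shows "step_ok k R P (word_decode (pr1 s))"
  using ok unfolding okc_def
proof (elim disjE conjE)
  assume "TR [cons_c (pr1 s) 0, sy s, st s]"
  then show ?thesis using R unfolding step_ok_def by blast
next
  assume "pr1 s = 0" then show ?thesis by (simp add: step_ok_def word_decode_0)
next
  assume "Q (su s)" "Q (sv s)" "pr1 s = app_c (su s) (sv s)"
  then show ?thesis using Q unfolding step_ok_def by (metis word_decode_app_c)
next
  assume "Q (su s)" "pr1 s = inv_c (su s)"
  then show ?thesis using Q unfolding step_ok_def by (metis word_decode_inv_c)
next
  assume a: "Q (su s)" "sx s < 2 * k" "pr1 s = cons_c (sx s) (app_c (su s) (cons_c (flip_c (sx s)) 0))"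
  have "word_decode (pr1 s) = [letter_decode (sx s)] @ word_decode (su s) @ [flip_letter (letter_decode (sx s))]"
    using a(3) by (simp add: word_decode_cons_c word_decode_app_c word_decode_0 flip_c_decode)
  then show ?thesis using Q[OF a(1)] letter_decode_lt[OF a(2)] unfolding step_ok_def by blast
next
  assume a: "Q (app_c (su s) (sv s))" "sx s < 2 * k" "pr1 s = app_c (su s) (cons_c (sx s) (cons_c (flip_c (sx s)) (sv s)))"
  have "word_decode (pr1 s) = word_decode (su s) @ [letter_decode (sx s), flip_letter (letter_decode (sx s))] @ word_decode (sv s)"
    using a(3) by (simp add: word_decode_cons_c word_decode_app_c flip_c_decode)
  moreover have "word_decode (su s) @ word_decode (sv s) \<in> P" using Q[OF a(1)] by (simp add: word_decode_app_c)
  ultimately show ?thesis using letter_decode_lt[OF a(2)] unfolding step_ok_def by blast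
next
  assume a: "Q (app_c (su s) (cons_c (sx s) (cons_c (flip_c (sx s)) (sv s))))" "pr1 s = app_c (su s) (sv s)"
  have "word_decode (su s) @ [letter_decode (sx s), flip_letter (letter_decode (sx s))] @ word_decode (sv s) \<in> P"
    using Q[OF a(1)] by (simp add: word_decode_cons_c word_decode_app_c flip_c_decode)
  moreover have "word_decode (pr1 s) = word_decode (su s) @ word_decode (sv s)"
    using a(2) by (simp add: word_decode_app_c)
  ultimately show ?thesis unfolding step_ok_def by blast
qed

lemma okc_complete:
  assumes R: "\<And>w. w \<in> R \<Longrightarrow> \<exists>y t. TR [cons_c (word_code w) 0, y, t]"
    and Q: "\<And>z. z \<in> P \<Longrightarrow> Q (word_code z)" and ok: "step_ok k R P w"
  shows "\<exists>s. pr1 s = word_code w \<and> okc TR k Q s"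
  using ok unfolding step_ok_def
proof (elim disjE bexE exE conjE)
  assume "w \<in> R"
  then obtain y t where "TR [cons_c (word_code w) 0, y, t]" using R by blast
  then show ?thesis by (intro exI[of _ "mks (word_code w) 0 0 0 y t"]) (simp add: okc_def)
next
  assume "w = []" then show ?thesis by (intro exI[of _ "mks 0 0 0 0 0 0"]) (simp add: okc_def)
next
  fix u v assume "u \<in> P" "v \<in> P" "w = u @ v"
  then show ?thesis using Q
    by (intro exI[of _ "mks (word_code w) (word_code u) (word_code v) 0 0 0"]) (simp add: okc_def)
next
  fix u assume "u \<in> P" "w = word_inv u"
  then show ?thesis using Q
    by (intro exI[of _ "mks (word_code w) (word_code u) 0 0 0 0"]) (simp add: okc_def)
next
  fix u x assume a: "u \<in> P" "fst x < k" "w = [x] @ u @ [flip_letter x]"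
  have "cons_c (letter_code x) (app_c (word_code u) (cons_c (flip_c (letter_code x)) 0)) = word_code w"
    using a(3) by (simp add: flip_c_code del: cons_c_word app_c_word) (metis app_c_word cons_c_word word_code_Nil)
  then show ?thesis using Q[OF a(1)] a(2)
    by (intro exI[of _ "mks (word_code w) (word_code u) 0 (letter_code x) 0 0"]) (simp add: okc_def letter_code_lt)
next
  fix u v x assume a: "u @ v \<in> P" "fst x < k" "w = u @ [x, flip_letter x] @ v"
  have "app_c (word_code u) (cons_c (letter_code x) (cons_c (flip_c (letter_code x)) (word_code v))) = word_code w"
    using a(3) by (simp add: flip_c_code)
  then show ?thesis using Q[OF a(1)] a(2)
    by (intro exI[of _ "mks (word_code w) (word_code u) (word_code v) (letter_code x) 0 0"]) (simp add: okc_def letter_code_lt)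
next
  fix u v x assume a: "u @ [x, flip_letter x] @ v \<in> P" "w = u @ v"
  have "app_c (word_code u) (cons_c (letter_code x) (cons_c (flip_c (letter_code x)) (word_code v))) = word_code (u @ [x, flip_letter x] @ v)"
    by (simp add: flip_c_code)
  then show ?thesis using Q[OF a(1)] a(2)
    by (intro exI[of _ "mks (word_code w) (word_code u) (word_code v) (letter_code x) 0 0"]) (simp add: okc_def)
qed



definition Dchk :: "(nat list \<Rightarrow> bool) \<Rightarrow> nat \<Rightarrow> nat list \<Rightarrow> bool" where
  "Dchk TR k = (\<lambda>v. (\<forall>j<len_c (v!1). okc TR k (\<lambda>z. \<exists>i<j. pr1 (nth_c (v!1) i) = z) (nth_c (v!1) j)) \<and>
      (\<exists>j<len_c (v!1). pr1 (nth_c (v!1) j) = v!0))"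

lemma rfp_Dchk: "rfp 3 TR \<Longrightarrow> rfp 2 (Dchk TR k)"
  unfolding Dchk_def okc_def
  by (intro rfI3 rfp_ball rfp_bex rf_sel | assumption | simp)+

lemma word_code_image: "n \<in> word_code ` S \<longleftrightarrow> word_decode n \<in> S"
  by (metis image_iff word_code_decode word_decode_code)

lemma pos_sig1:
  assumes TR: "rfp 3 TR" and R1: "\<And>n y t. TR [cons_c n 0, y, t] \<Longrightarrow> word_decode n \<in> R"
    and R2: "\<And>w. w \<in> R \<Longrightarrow> \<exists>y t. TR [cons_c (word_code w) 0, y, t]" and Rk: "R \<subseteq> words_over k"
  shows "sig1 (word_code ` normal_closure_words k R)"
  unfolding sig1_def
proof (intro exI[of _ "Dchk TR k"] conjI allI)
  show "rfp 2 (Dchk TR k)" using TR by (rule rfp_Dchk)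
  fix n
  have "n \<in> word_code ` normal_closure_words k R \<longleftrightarrow> (\<exists>ws. deriv k R ws \<and> word_decode n \<in> set ws)"
    unfolding word_code_image using ncl_iff[OF Rk] by blast
  also have "\<dots> \<longleftrightarrow> (\<exists>t. Dchk TR k [n, t])"
  proof
    assume "\<exists>ws. deriv k R ws \<and> word_decode n \<in> set ws"
    then obtain ws where ws: "deriv k R ws" "word_decode n \<in> set ws" by blast
    have A: "\<exists>s. pr1 s = word_code (ws!j) \<and> okc TR k (\<lambda>z. z \<in> word_code ` set (take j ws)) s"
      if j: "j < length ws" for j
    proof -
      have "step_ok k R (set (take j ws)) (ws!j)" using ws(1) j deriv_def by blast
      then show ?thesis by (intro okc_complete[OF R2]) auto
    qed
    have "\<forall>j. \<exists>s. j < length ws \<longrightarrow> pr1 s = word_code (ws!j) \<and> okc TR k (\<lambda>z. z \<in> word_code ` set (take j ws)) s"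
      using A by blast
    then obtain sf where sf: "\<And>j. j < length ws \<Longrightarrow> pr1 (sf j) = word_code (ws!j) \<and> okc TR k (\<lambda>z. z \<in> word_code ` set (take j ws)) (sf j)"
      by metis
    define t where "t = list_encode (map sf [0..<length ws])"
    have lt: "len_c t = length ws" by (simp add: t_def len_c_def)
    have nt: "\<And>j. j < length ws \<Longrightarrow> nth_c t j = sf j" by (simp add: t_def nth_c_enc)
    show "\<exists>t. Dchk TR k [n, t]"
    proof (intro exI[of _ t])
      have "okc TR k (\<lambda>z. \<exists>i<j. pr1 (nth_c t i) = z) (nth_c t j)" if j: "j < length ws" for j
      proof (rule okc_mono)
        show "okc TR k (\<lambda>z. z \<in> word_code ` set (take j ws)) (nth_c t j)" using sf[OF j] nt[OF j] by simp
        fix z assume "z \<in> word_code ` set (take j ws)"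
        then obtain i where "i < j" "z = word_code (ws!i)" using j by (auto simp: in_set_conv_nth)
        then show "\<exists>i<j. pr1 (nth_c t i) = z" using j sf nt by (metis order.strict_trans)
      qed
      moreover obtain j where "j < length ws" "ws!j = word_decode n" using ws(2) by (metis in_set_conv_nth)
      then have "\<exists>j<len_c t. pr1 (nth_c t j) = n" using lt nt sf by (metis word_code_decode)
      ultimately show "Dchk TR k [n, t]" unfolding Dchk_def using lt by simp
    qed
  next
    assume "\<exists>t. Dchk TR k [n, t]"
    then obtain t where a: "\<And>j. j < len_c t \<Longrightarrow> okc TR k (\<lambda>z. \<exists>i<j. pr1 (nth_c t i) = z) (nth_c t j)"
      "\<exists>j<len_c t. pr1 (nth_c t j) = n" unfolding Dchk_def by auto
    define ws where "ws = map (\<lambda>j. word_decode (pr1 (nth_c t j))) [0..<len_c t]"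
    have "deriv k R ws" unfolding deriv_def
    proof (intro allI impI)
      fix j assume "j < length ws"
      then have j: "j < len_c t" by (simp add: ws_def)
      have "step_ok k R (set (take j ws)) (word_decode (pr1 (nth_c t j)))"
      proof (rule okc_sound[OF R1 _ a(1)[OF j]])
        fix z assume "\<exists>i<j. pr1 (nth_c t i) = z"
        then obtain i where "i < j" "pr1 (nth_c t i) = z" by blast
        then show "word_decode z \<in> set (take j ws)" using j
          by (auto simp: ws_def in_set_conv_nth intro!: exI[of _ i])
      qed
      then show "step_ok k R (set (take j ws)) (ws!j)" using j by (simp add: ws_def)
    qed
    moreover have "word_decode n \<in> set ws" using a(2) by (auto simp: ws_def)
    ultimately show "\<exists>ws. deriv k R ws \<and> word_decode n \<in> set ws" by blast
  qed
  finally show "n \<in> word_code ` normal_closure_words k R \<longleftrightarrow> (\<exists>t. Dchk TR k [n, t])" .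
qed



lemma sig1_preimage:
  assumes "sig1 B" "rf 1 (\<lambda>xs. F (xs!0))"
  shows "sig1 {n. F n \<in> B}"
proof -
  obtain P where P: "rfp 2 P" "\<forall>n. n \<in> B \<longleftrightarrow> (\<exists>t. P [n, t])" using assms(1) unfolding sig1_def by (elim exE conjE)
  have "rf 2 (\<lambda>v. F (v!0))" using rf_comp1[OF assms(2), of 2 "\<lambda>v. v!0"] by (simp add: rf_proj)
  then have "rfp 2 (\<lambda>v. P [F (v!0), v!1])" by (intro rfp_comp2 P(1) rf_proj) simp_all
  then show ?thesis unfolding sig1_def using P(2) by (intro exI[of _ "\<lambda>v. P [F (v!0), v!1]"]) auto
qed

lemma rfp_mem:
  assumes "computable_set B" "rf n A"
  shows "rfp n (\<lambda>xs. A xs \<in> B)"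
proof -
  obtain f where f: "\<And>m. reval f [m] (if m \<in> B then 1 else 0)" using assms(1) computable_set_def by blast
  have "rfp 1 (\<lambda>xs. xs!0 \<in> B)" unfolding rfp_def rf_def
  proof (intro exI[of _ f] allI impI)
    fix xs :: "nat list" assume "length xs = 1"
    then obtain m where "xs = [m]" by (metis One_nat_def length_0_conv length_Suc_conv)
    then show "reval f xs (if xs!0 \<in> B then 1 else 0)" using f by simp
  qed
  then have "rfp n (\<lambda>xs. [A xs] ! 0 \<in> B)" using assms(2) by (rule rfp_comp1)
  then show ?thesis by simp
qed

lemma EN_finite:
  fixes G :: "('a, 'b) monoid_scheme"
  assumes EN: "equationally_noetherian G" and Rk: "R \<subseteq> words_over k"
  shows "\<exists>R0. finite R0 \<and> R0 \<subseteq> R \<and> (\<forall>a. (\<forall>i. a i \<in> carrier G) \<longrightarrow>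
      (\<forall>r\<in>R0. eval_word G a r = \<one>\<^bsub>G\<^esub>) \<longrightarrow> (\<forall>r\<in>R. eval_word G a r = \<one>\<^bsub>G\<^esub>))"
proof -
  define S :: "'a eqn set" where "S = (\<lambda>r. map Inr r) ` R"
  have "\<forall>e\<in>S. is_equation G k e" using Rk
    by (auto simp: S_def is_equation_def words_over_def)
  then obtain S0 where S0: "S0 \<subseteq> S" "finite S0" "solution_set G k S = solution_set G k S0"
    using EN unfolding equationally_noetherian_def by blast
  define R0 where "R0 = {r \<in> R. map Inr r \<in> S0}"
  have "R0 \<subseteq> map projr ` S0"
  proof
    fix r assume "r \<in> R0"
    then have "map projr (map Inr r) = r" "map Inr r \<in> S0" by (auto simp: R0_def comp_def)
    then show "r \<in> map projr ` S0" by (metis image_eqI)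
  qed
  then have fin: "finite R0" using S0(2) finite_surj by blast
  show ?thesis
  proof (intro exI[of _ R0] conjI allI impI)
    show "finite R0" by (rule fin)
    show "R0 \<subseteq> R" by (auto simp: R0_def)
    fix a :: "nat \<Rightarrow> 'a" assume a: "\<forall>i. a i \<in> carrier G" and r0: "\<forall>r\<in>R0. eval_word G a r = \<one>\<^bsub>G\<^esub>"
    define as where "as = map a [0..<k]"
    have ev: "eval_eqn G as (map Inr r) = eval_word G a r" if "r \<in> R" for r
    proof -
      have "eval_eqn G as (map Inr r) = eval_word G (\<lambda>i. as ! i) r" by (rule eval_eqn_Inr)
      also have "\<dots> = eval_word G a r"
      proof (rule eval_word_cong)
        fix l assume "l \<in> set r"
        then have "fst l < k" using that Rk by (auto simp: words_over_def)
        then show "as ! fst l = a (fst l)" by (simp add: as_def)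
      qed
      finally show ?thesis .
    qed
    have "as \<in> solution_set G k S0"
      unfolding solution_set_def
    proof (intro CollectI conjI ballI)
      show "length as = k" by (simp add: as_def)
      show "set as \<subseteq> carrier G" using a by (auto simp: as_def)
      fix e assume "e \<in> S0"
      then obtain r where "r \<in> R" "e = map Inr r" using S0(1) S_def by blast
      then show "eval_eqn G as e = \<one>\<^bsub>G\<^esub>" using ev r0 \<open>e \<in> S0\<close> by (auto simp: R0_def)
    qed
    then have "as \<in> solution_set G k S" using S0(3) by simp
    then show "\<forall>r\<in>R. eval_word G a r = \<one>\<^bsub>G\<^esub>"
      using ev unfolding solution_set_def S_def by auto
  qed
qed



theorem mainTheorem4:
  fixes G :: "('g, 'c) monoid_scheme" and H :: "('h, 'd) monoid_scheme"
  assumes "group G" and "group H"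
    and "equationally_noetherian G"
    and "solvable_word_problem G"
    and "finitely_generated_group H"
    and "recursively_presented H"
    and "residually G H"
  shows "solvable_word_problem H"
proof -
  interpret G: group G by fact
  interpret H: group H by fact
  obtain gG where gG: "range gG \<subseteq> carrier G" "generate G (range gG) = carrier G"
    "computable_set (word_code ` {w. eval_word G gG w = \<one>\<^bsub>G\<^esub>})"
    using assms(4) unfolding solvable_word_problem_def by blast
  obtain k g R where H1: "g ` {..<k} \<subseteq> carrier H" "generate H (g ` {..<k}) = carrier H"
    "R \<subseteq> words_over k" "re_set (word_code ` R)"
    "\<forall>w \<in> words_over k. eval_word H g w = \<one>\<^bsub>H\<^esub> \<longleftrightarrow> w \<in> normal_closure_words k R"
    using assms(6) unfolding recursively_presented_def by blast
  define WG where "WG = word_code ` {w. eval_word G gG w = \<one>\<^bsub>G\<^esub>}"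
  have gGc: "\<And>i. gG i \<in> carrier G" using gG(1) by blast
  define gH where "gH = (\<lambda>i. if i < k then g i else \<one>\<^bsub>H\<^esub>)"
  have gHc: "\<And>i. gH i \<in> carrier H" using H1(1) by (auto simp: gH_def)
  have ncl_H: "\<And>w. w \<in> words_over k \<Longrightarrow> eval_word H gH w = \<one>\<^bsub>H\<^esub> \<longleftrightarrow> w \<in> normal_closure_words k R"
  proof -
    fix w assume w: "w \<in> words_over k"
    have "eval_word H gH w = eval_word H g w"
      using w by (intro eval_word_cong) (auto simp: gH_def words_over_def)
    then show "eval_word H gH w = \<one>\<^bsub>H\<^esub> \<longleftrightarrow> w \<in> normal_closure_words k R" using H1(5) w by simp
  qed
  obtain f where f: "\<And>n. n \<in> word_code ` R \<longleftrightarrow> (\<exists>y. reval f [n] y)"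
    using H1(4) unfolding re_set_def by blast
  obtain TR where TR: "sigrep f TR" using sig_exists by blast
  have TRe: "\<And>xs y. reval f xs y \<longleftrightarrow> (\<exists>t. TR [list_encode xs, y, t])" using TR sigrep_def by blast
  have e0: "\<And>n. cons_c n 0 = list_encode [n]" by (simp add: cons_c_def)
  have pos: "sig1 (word_code ` normal_closure_words k R)"
  proof (rule pos_sig1)
    show "rfp 3 TR" using TR sigrep_def by blast
    show "\<And>n y t. TR [cons_c n 0, y, t] \<Longrightarrow> word_decode n \<in> R"
      using f TRe e0 word_code_image by metis
    show "\<exists>y t. TR [cons_c (word_code w) 0, y, t]" if "w \<in> R" for w
    proof -
      have "word_code w \<in> word_code ` R" using that by blast
      then obtain y where "reval f [word_code w] y" using f by blast
      then show ?thesis unfolding e0 using TRe by blast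
    qed
    show "R \<subseteq> words_over k" by (rule H1(3))
  qed
  obtain R0 where R0: "finite R0" "R0 \<subseteq> R" "\<And>a. (\<forall>i. a i \<in> carrier G) \<Longrightarrow>
      (\<forall>r\<in>R0. eval_word G a r = \<one>\<^bsub>G\<^esub>) \<Longrightarrow> (\<forall>r\<in>R. eval_word G a r = \<one>\<^bsub>G\<^esub>)"
    using EN_finite[OF assms(3) H1(3)] by blast
  obtain rl where rl: "set rl = R0" using R0(1) finite_list by blast
  define av where "av = (\<lambda>us i. eval_word G gG (word_decode (nth_c us i)))"
  have avc: "\<And>us i. av us i \<in> carrier G" unfolding av_def using gGc by (rule G.eval_word_closed)
  have WGe: "\<And>r us. subst_c (word_code r) us \<in> WG \<longleftrightarrow> eval_word G (av us) r = \<one>\<^bsub>G\<^esub>"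
    unfolding WG_def word_code_image subst_c_word word_decode_code av_def
    using eval_subst[OF assms(1) gGc] by simp
  have negsem: "w \<notin> normal_closure_words k R \<longleftrightarrow>
      (\<exists>us. (\<forall>r\<in>set rl. subst_c (word_code r) us \<in> WG) \<and> subst_c (word_code w) us \<notin> WG)"
    if w: "w \<in> words_over k" for w
  proof
    assume nw: "w \<notin> normal_closure_words k R"
    then have ne: "eval_word H g w \<noteq> \<one>\<^bsub>H\<^esub>" using H1(5) w by blast
    have eq: "eval_word H g w = eval_word H gH w"
      using w by (intro eval_word_cong) (auto simp: gH_def words_over_def)
    have "eval_word H g w \<in> carrier H" unfolding eq using gHc by (rule H.eval_word_closed)
    then obtain \<phi> where phi: "\<phi> \<in> hom H G" "\<phi> (eval_word H g w) \<noteq> \<one>\<^bsub>G\<^esub>"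
      using assms(7) ne unfolding residually_def by blast
    have "\<forall>i. \<exists>u. i < k \<longrightarrow> eval_word G gG u = \<phi> (g i)"
    proof (intro allI)
      fix i show "\<exists>u. i < k \<longrightarrow> eval_word G gG u = \<phi> (g i)"
      proof (cases "i < k")
        case True
        then have "g i \<in> carrier H" using H1(1) by blast
        then have "\<phi> (g i) \<in> carrier G" by (rule hom_in_carrier[OF phi(1)])
        then have "\<phi> (g i) \<in> generate G (range gG)" using gG(2) by simp
        then obtain u where "eval_word G gG u = \<phi> (g i)" using G.generate_words[of gG, OF gGc] by blast
        then show ?thesis by blast
      qed simp
    qed
    then obtain uf where uf: "\<And>i. i < k \<Longrightarrow> eval_word G gG (uf i) = \<phi> (g i)" by metis
    define us where "us = list_encode (map (\<lambda>i. word_code (uf i)) [0..<k])"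
    have avus: "av us i = \<phi> (gH i)" if "i < k" for i
      using that uf by (simp add: av_def us_def nth_c_enc gH_def)
    have key: "eval_word G (av us) v = \<phi> (eval_word H gH v)" if "v \<in> words_over k" for v
    proof -
      have "eval_word G (av us) v = eval_word G (\<lambda>i. \<phi> (gH i)) v"
        using that avus by (intro eval_word_cong) (auto simp: words_over_def)
      also have "\<dots> = \<phi> (eval_word H gH v)" using hom_eval[OF assms(1,2) phi(1) gHc] by simp
      finally show ?thesis .
    qed
    show "\<exists>us. (\<forall>r\<in>set rl. subst_c (word_code r) us \<in> WG) \<and> subst_c (word_code w) us \<notin> WG"
    proof (intro exI[of _ us] conjI ballI)
      fix r assume "r \<in> set rl"
      then have r: "r \<in> R" "r \<in> words_over k" using rl R0(2) H1(3) by auto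
      then have "r \<in> normal_closure_words k R" using normal_closure_words.rel by blast
      then have "eval_word H gH r = \<one>\<^bsub>H\<^esub>" using ncl_H r(2) by blast
      then show "subst_c (word_code r) us \<in> WG"
        unfolding WGe key[OF r(2)] using hom_one[OF phi(1) assms(2,1)] by simp
    next
      show "subst_c (word_code w) us \<notin> WG"
        unfolding WGe key[OF w] using phi(2) eq by simp
    qed
  next
    assume "\<exists>us. (\<forall>r\<in>set rl. subst_c (word_code r) us \<in> WG) \<and> subst_c (word_code w) us \<notin> WG"
    then obtain us where us: "\<forall>r\<in>R0. eval_word G (av us) r = \<one>\<^bsub>G\<^esub>" "eval_word G (av us) w \<noteq> \<one>\<^bsub>G\<^esub>"
      using WGe rl by auto
    have "\<forall>r\<in>R. eval_word G (av us) r = \<one>\<^bsub>G\<^esub>" using R0(3) avc us(1) by blast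
    then show "w \<notin> normal_closure_words k R"
      using G.ncl_vanish[of "av us" R] avc us(2) by blast
  qed
  define A where "A = word_code ` {w. eval_word H gH w = \<one>\<^bsub>H\<^esub>}"
  define red where "red = (\<lambda>n. filter (\<lambda>l. fst l < k) (word_decode n))"
  have redk: "\<And>n. red n \<in> words_over k" by (auto simp: red_def words_over_def)
  have redc: "\<And>n. red_c k n = word_code (red n)" by (metis red_c_word red_def word_code_decode)
  have Aiff: "n \<in> A \<longleftrightarrow> red n \<in> normal_closure_words k R" for n
  proof -
    have "n \<in> A \<longleftrightarrow> eval_word H gH (word_decode n) = \<one>\<^bsub>H\<^esub>" unfolding A_def word_code_image by simp
    also have "eval_word H gH (word_decode n) = eval_word H g (red n)"
      unfolding red_def gH_def using eval_filter[OF assms(2)] H1(1) by blast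
    also have "eval_word H g (red n) = \<one>\<^bsub>H\<^esub> \<longleftrightarrow> red n \<in> normal_closure_words k R" using H1(5) redk by blast
    finally show ?thesis .
  qed
  have sigA: "sig1 A"
  proof -
    have "sig1 {n. red_c k n \<in> word_code ` normal_closure_words k R}"
      by (rule sig1_preimage[OF pos]) (intro rf_red_c rf_proj; simp)
    moreover have "{n. red_c k n \<in> word_code ` normal_closure_words k R} = A"
      using Aiff by (auto simp: redc word_code_image)
    ultimately show ?thesis by simp
  qed
  have sigNA: "sig1 (- A)"
  proof -
    have "sig1 {n. \<exists>us. (\<forall>r\<in>set rl. subst_c (word_code r) us \<in> WG) \<and> subst_c (red_c k n) us \<notin> WG}"
      unfolding sig1_def
    proof (intro exI[of _ "\<lambda>v. (\<forall>r\<in>set rl. subst_c (word_code r) (v!1) \<in> WG) \<and> \<not> subst_c (red_c k (v!0)) (v!1) \<in> WG"] conjI allI)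
      show "rfp 2 (\<lambda>v. (\<forall>r\<in>set rl. subst_c (word_code r) (v!1) \<in> WG) \<and> \<not> subst_c (red_c k (v!0)) (v!1) \<in> WG)"
        using gG(3) unfolding WG_def[symmetric]
        by (intro rfp_and rfp_not rfp_all_list rfp_mem rf_subst_c rf_red_c rf_const rf_proj; simp)
    qed auto
    moreover have "{n. \<exists>us. (\<forall>r\<in>set rl. subst_c (word_code r) us \<in> WG) \<and> subst_c (red_c k n) us \<notin> WG} = - A"
      using Aiff negsem redk by (auto simp: redc)
    ultimately show ?thesis by simp
  qed
  have "computable_set A" by (rule decide[OF sigA sigNA])
  moreover have "range gH \<subseteq> carrier H" using gHc by blast
  moreover have "generate H (range gH) = carrier H"
  proof
    show "generate H (range gH) \<subseteq> carrier H" using gHc by (intro H.generate_incl) blast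
    have "g ` {..<k} \<subseteq> range gH" by (auto simp: gH_def intro!: range_eqI)
    then show "carrier H \<subseteq> generate H (range gH)" using H1(2) H.mono_generate by blast
  qed
  ultimately show ?thesis unfolding solvable_word_problem_def A_def by blast
qed


end
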